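(* Let $X,Y$ be real Banach spaces, $D\subseteq X$ a nonempty open connected set, $x_0\in D$, $y_0=f(x_0)$, and $f:D\to Y$ a local homeomorphism. Then there exists a flow $\Phi:D_\Phi\to D$ in $D$ satisfying $$f(\Phi(x,t))=\Psi(f(x),t)\qquad\text{for all }(x,t)\in D_\Phi,$$ where $\Psi(y,t)=y_0+e^{-t}(y-y_0)$; any two flows in $D$ satisfying this identity coincide on the intersection of their domains, so there is a unique such flow with maximal domain. If moreover $f$ is a local $C^1$ diffeomorphism, then this maximal flow $\Phi$ is $C^1$ and is the (maximal) flow of the differential equation $$\dot x=F(x),\qquad F:D\to X,\quad F(x)=-f'(x)^{-1}\bigl(f(x)-f(x_0)\bigr).$$
   Context: A map is a local homeomorphism if every point has an open neighbourhood mapped homeomorphically onto an open set. A flow in $D$ is a map $\Phi:D_\Phi\to D$ such that: (i) $D_\Phi$ is an open subset of $D\times\mathbb R$ and $\Phi$ is continuous; (ii) for each $x\in D$, $\{t\in\mathbb R:(x,t)\in D_\Phi\}$ is an interval containing $0$; (iii) $\Phi(x,0)=x$ for all $x\in D$; (iv) if $(x,t_1),(x,t_1+t_2)\in D_\Phi$ then $(\Phi(x,t_1),t_2)\in D_\Phi$ and $\Phi(\Phi(x,t_1),t_2)=\Phi(x,t_1+t_2)$. $f$ is a local $C^1$ diffeomorphism if it is $C^1$ (Fréchet) and each point has an open neighbourhood mapped homeomorphically onto an open set with $C^1$ inverse; then $f'(x)$ is invertible for every $x$. *)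

theory Defs
  imports "HOL-Analysis.Analysis"
begin

definition local_homeo_on :: "'a::topological_space set \<Rightarrow> ('a \<Rightarrow> 'b::topological_space) \<Rightarrow> bool" where
  "local_homeo_on D f \<longleftrightarrow>
     (\<forall>x\<in>D. \<exists>U. open U \<and> x \<in> U \<and> U \<subseteq> D \<and> open (f ` U) \<and> (\<exists>g. homeomorphism U (f ` U) f g))"

definition local_C1_diffeo_on ::
  "'a::real_normed_vector set \<Rightarrow> ('a \<Rightarrow> 'b::real_normed_vector) \<Rightarrow> ('a \<Rightarrow> 'a \<Rightarrow>\<^sub>L 'b) \<Rightarrow> bool" where
  "local_C1_diffeo_on D f f' \<longleftrightarrow>
     (\<forall>x\<in>D. (f has_derivative blinfun_apply (f' x)) (at x)) \<and> continuous_on D f' \<and>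
     (\<forall>x\<in>D. \<exists>U. open U \<and> x \<in> U \<and> U \<subseteq> D \<and> open (f ` U) \<and>
        (\<exists>g g'. homeomorphism U (f ` U) f g \<and>
           (\<forall>y\<in>f ` U. (g has_derivative blinfun_apply (g' y)) (at y)) \<and> continuous_on (f ` U) g'))"

definition is_flow :: "'a::topological_space set \<Rightarrow> ('a \<times> real) set \<Rightarrow> ('a \<times> real \<Rightarrow> 'a) \<Rightarrow> bool" where
  "is_flow D DP P \<longleftrightarrow>
     openin (top_of_set (D \<times> UNIV)) DP \<and> continuous_on DP P \<and> P ` DP \<subseteq> D \<and>
     (\<forall>x\<in>D. is_interval {t. (x, t) \<in> DP} \<and> (x, 0) \<in> DP) \<and>
     (\<forall>x\<in>D. P (x, 0) = x) \<and>
     (\<forall>x t1 t2. (x, t1) \<in> DP \<longrightarrow> (x, t1 + t2) \<in> DP \<longrightarrow>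
        (P (x, t1), t2) \<in> DP \<and> P (P (x, t1), t2) = P (x, t1 + t2))"

definition Psi :: "'b::real_vector \<Rightarrow> 'b \<Rightarrow> real \<Rightarrow> 'b" where
  "Psi y0 y t = y0 + exp (- t) *\<^sub>R (y - y0)"

definition conj_flow :: "'a::topological_space set \<Rightarrow> ('a \<Rightarrow> 'b::real_vector) \<Rightarrow> 'a \<Rightarrow>
    ('a \<times> real) set \<Rightarrow> ('a \<times> real \<Rightarrow> 'a) \<Rightarrow> bool" where
  "conj_flow D f x0 DP P \<longleftrightarrow> is_flow D DP P \<and>
     (\<forall>x t. (x, t) \<in> DP \<longrightarrow> f (P (x, t)) = Psi (f x0) (f x) t)"

end

theory Submission imports Defs begin

lemma lh_chart:
  assumes "local_homeo_on D f" "z \<in> D"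
  obtains U g where "open U" "z \<in> U" "U \<subseteq> D" "open (f ` U)" "homeomorphism U (f ` U) f g"
  using assms unfolding local_homeo_on_def by blast

lemma lh_cont:
  assumes "local_homeo_on D f" "z \<in> D" shows "isCont f z"
proof -
  obtain U g where "open U" "z \<in> U" "homeomorphism U (f ` U) f g"
    using lh_chart[OF assms] by metis
  then show ?thesis using homeomorphism_cont1 continuous_on_eq_continuous_at by blast
qed

lemma uniq_interval:
  fixes v w :: "real \<Rightarrow> 'a::metric_space" and f :: "'a \<Rightarrow> 'b::topological_space"
  assumes lh: "local_homeo_on D f" and J: "is_interval J"
    and cv: "continuous_on J v" and cw: "continuous_on J w"
    and vD: "v ` J \<subseteq> D" and wD: "w ` J \<subseteq> D"
    and fe: "\<And>\<tau>. \<tau>\<in>J \<Longrightarrow> f (v \<tau>) = f (w \<tau>)" and a: "a \<in> J" and va: "v a = w a"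
    and t: "\<tau> \<in> J"
  shows "v \<tau> = w \<tau>"
proof -
  let ?A = "{s\<in>J. v s = w s}"
  have op: "openin (top_of_set J) ?A"
    unfolding openin_euclidean_subtopology_iff
  proof safe
    fix s assume s: "s \<in> J" "v s = w s"
    obtain U g where U: "open U" "v s \<in> U" "U \<subseteq> D" "open (f ` U)" "homeomorphism U (f ` U) f g"
      using lh_chart[OF lh] s vD by blast
    obtain e where e: "e > 0" "ball (v s) e \<subseteq> U" using U open_contains_ball by blast
    obtain d1 where d1: "d1 > 0" "\<forall>x'\<in>J. dist x' s < d1 \<longrightarrow> dist (v x') (v s) < e"
      using cv s(1) e(1) unfolding continuous_on_iff by blast
    obtain d2 where d2: "d2 > 0" "\<forall>x'\<in>J. dist x' s < d2 \<longrightarrow> dist (w x') (w s) < e"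
      using cw s(1) e(1) unfolding continuous_on_iff by blast
    show "\<exists>e>0. \<forall>x'\<in>J. dist x' s < e \<longrightarrow> x' \<in> ?A"
    proof (intro exI[of _ "min d1 d2"] conjI ballI impI)
      fix x' assume x': "x' \<in> J" "dist x' s < min d1 d2"
      have "dist (v x') (v s) < e" "dist (w x') (w s) < e" using d1 d2 x' by auto
      then have "v x' \<in> ball (v s) e" "w x' \<in> ball (w s) e" by (auto simp: dist_commute)
      then have "v x' \<in> U" "w x' \<in> U" using e s(2) by auto
      then have "g (f (v x')) = v x'" "g (f (w x')) = w x'"
        using U(5) unfolding homeomorphism_def by auto
      then have "v x' = w x'" using fe[OF x'(1)] by metis
      then show "x' \<in> ?A" using x'(1) by blast
    qed (use d1 d2 in simp)
  qed
  have cl: "closedin (top_of_set J) ?A"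
  proof -
    have "continuous_on J (\<lambda>s. dist (v s) (w s))"
      by (intro continuous_intros cv cw)
    then have "closedin (top_of_set J) {s \<in> J. dist (v s) (w s) = 0}"
      by (rule continuous_closedin_preimage_constant)
    then show ?thesis by simp
  qed
  have "connected J" using J is_interval_connected by blast
  then have "?A = {} \<or> ?A = J" using op cl connected_clopen by blast
  then show ?thesis using a va t by blast
qed


lemma pair_cont_metric:
  fixes h :: "'a::metric_space \<times> real \<Rightarrow> 'c::metric_space"
  assumes "isCont h (x,s)" "e > 0"
  shows "\<exists>r>0. \<forall>x' \<tau>. dist x' x < r \<and> \<bar>\<tau> - s\<bar> < r \<longrightarrow> dist (h (x',\<tau>)) (h (x,s)) < e"
proof -
  obtain k where k: "k > 0" "\<forall>p. dist p (x,s) < k \<longrightarrow> dist (h p) (h (x,s)) < e"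
    using assms unfolding continuous_at_eps_delta by blast
  show ?thesis
  proof (intro exI[of _ "k/2"] conjI allI impI)
    fix x' \<tau> assume a: "dist x' x < k/2 \<and> \<bar>\<tau> - s\<bar> < k/2"
    have "dist (x',\<tau>) (x,s) \<le> dist x' x + dist \<tau> s"
      unfolding dist_Pair_Pair using sqrt_sum_squares_le_sum_abs[of "dist x' x" "dist \<tau> s"] by simp
    also have "\<dots> < k" using a by (simp add: dist_real_def)
    finally show "dist (h (x',\<tau>)) (h (x,s)) < e" using k by blast
  qed (use k in auto)
qed

definition liftH :: "'a::metric_space set \<Rightarrow> ('a \<Rightarrow> 'b) \<Rightarrow> ('a \<times> real \<Rightarrow> 'b) \<Rightarrow> 'a \<Rightarrow> real \<Rightarrow> (real \<Rightarrow> 'a) \<Rightarrow> bool" where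
  "liftH D f H x a v \<longleftrightarrow> continuous_on {0..a} v \<and> v ` {0..a} \<subseteq> D \<and> v 0 = x \<and> (\<forall>\<sigma>\<in>{0..a}. f (v \<sigma>) = H (x,\<sigma>))"

lemma liftH_restrict: "liftH D f H x a v \<Longrightarrow> 0 \<le> b \<Longrightarrow> b \<le> a \<Longrightarrow> liftH D f H x b v"
  unfolding liftH_def by (auto intro: continuous_on_subset)


context
  fixes D :: "'a::metric_space set" and f :: "'a \<Rightarrow> 'b::metric_space" and H :: "'a \<times> real \<Rightarrow> 'b"
  assumes oD: "open D" and lh: "local_homeo_on D f"
    and Hc: "\<And>x s. x \<in> D \<Longrightarrow> isCont H (x,s)" and H0: "\<And>x. x\<in>D \<Longrightarrow> H (x,0) = f x"
begin

lemma H_cont_on: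
  assumes x: "x \<in> D" shows "continuous_on S (\<lambda>\<tau>. H (x,\<tau>))"
proof (intro continuous_at_imp_continuous_on ballI)
  fix \<tau>
  have "isCont (H \<circ> (\<lambda>\<tau>. (x,\<tau>))) \<tau>"
  proof (rule continuous_at_compose)
    show "isCont (\<lambda>\<tau>. (x,\<tau>)) \<tau>" by (intro continuous_intros)
    show "isCont H ((\<lambda>\<tau>. (x,\<tau>)) \<tau>)" using Hc[OF x] by simp
  qed
  then show "isCont (\<lambda>\<tau>. H (x,\<tau>)) \<tau>" by (simp add: o_def)
qed

lemma chart_comp_cont:
  assumes U: "homeomorphism U (f ` U) f g" "open (f ` U)" and x: "x \<in> D"
    and sub: "\<And>\<tau>. \<tau> \<in> S \<Longrightarrow> H (x,\<tau>) \<in> f ` U"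
  shows "continuous_on S (\<lambda>\<tau>. g (H (x,\<tau>)))"
proof (rule continuous_on_compose2[OF homeomorphism_cont2[OF U(1)] H_cont_on[OF x]])
  show "(\<lambda>\<tau>. H (x,\<tau>)) ` S \<subseteq> f ` U" using sub by (rule image_subsetI)
qed

lemma liftH_uniq:
  assumes A: "liftH D f H x a v" and B: "liftH D f H x b w" and t: "0 \<le> \<tau>" "\<tau> \<le> a" "\<tau> \<le> b"
  shows "v \<tau> = w \<tau>"
proof (rule uniq_interval[OF lh, of "{0..min a b}" v w 0])
  have s: "{0..min a b} \<subseteq> {0..a}" "{0..min a b} \<subseteq> {0..b}" by auto
  show "continuous_on {0..min a b} v" using A s(1) unfolding liftH_def using continuous_on_subset by blast
  show "continuous_on {0..min a b} w" using B s(2) unfolding liftH_def using continuous_on_subset by blast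
  show "v ` {0..min a b} \<subseteq> D" using A s(1) unfolding liftH_def by blast
  show "w ` {0..min a b} \<subseteq> D" using B s(2) unfolding liftH_def by blast
  show "f (v s) = f (w s)" if "s \<in> {0..min a b}" for s
    using A B that s unfolding liftH_def by (metis subsetD)
  show "0 \<in> {0..min a b}" using t by simp
  show "v 0 = w 0" using A B unfolding liftH_def by simp
  show "\<tau> \<in> {0..min a b}" using t by simp
qed (simp add: is_interval_cc)

lemma window:
  assumes x: "x \<in> D" and V: "open V" "H (x,s) \<in> V"
  shows "\<exists>r>0. \<forall>x' \<tau>. dist x' x < r \<and> \<bar>\<tau> - s\<bar> < r \<longrightarrow> x' \<in> D \<and> H (x',\<tau>) \<in> V"
proof -
  obtain e where e: "e > 0" "ball (H (x,s)) e \<subseteq> V" using V open_contains_ball by blast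
  obtain r1 where r1: "r1 > 0" "\<forall>x' \<tau>. dist x' x < r1 \<and> \<bar>\<tau> - s\<bar> < r1 \<longrightarrow> dist (H (x',\<tau>)) (H (x,s)) < e"
    using pair_cont_metric[OF Hc[OF x] e(1)] by blast
  obtain r2 where r2: "r2 > 0" "ball x r2 \<subseteq> D" using oD x open_contains_ball by blast
  show ?thesis
  proof (intro exI[of _ "min r1 r2"] conjI allI impI)
    fix x' \<tau> assume a: "dist x' x < min r1 r2 \<and> \<bar>\<tau> - s\<bar> < min r1 r2"
    then have "x' \<in> ball x r2" by (simp add: dist_commute)
    then show "x' \<in> D" using r2 by blast
    have "dist (H (x',\<tau>)) (H (x,s)) < e" using a r1 by simp
    then have "H (x',\<tau>) \<in> ball (H (x,s)) e" by (simp add: dist_commute)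
    then show "H (x',\<tau>) \<in> V" using e by blast
  qed (use r1 r2 in simp)
qed

lemma liftH_D:
  assumes "liftH D f H x a v" "0 \<le> \<tau>" "\<tau> \<le> a"
  shows "v \<tau> \<in> D" "f (v \<tau>) = H (x,\<tau>)"
  using assms unfolding liftH_def by auto

lemma step:
  assumes U: "homeomorphism U (f ` U) f g" "open (f ` U)" "U \<subseteq> D"
    and x': "x' \<in> D" and v: "liftH D f H x' \<sigma> v" "v \<sigma> \<in> U" and s0: "0 \<le> \<sigma>" "0 \<le> \<sigma>'"
    and Hin: "\<And>\<tau>. min \<sigma> \<sigma>' \<le> \<tau> \<Longrightarrow> \<tau> \<le> max \<sigma> \<sigma>' \<Longrightarrow> H (x',\<tau>) \<in> f ` U"
  shows "\<exists>v'. liftH D f H x' \<sigma>' v' \<and> v' \<sigma>' = g (H (x',\<sigma>'))"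
proof -
  have gf: "\<And>y. y \<in> U \<Longrightarrow> g (f y) = y" and fg: "\<And>y. y \<in> f ` U \<Longrightarrow> f (g y) = y"
    and gU: "\<And>y. y \<in> f ` U \<Longrightarrow> g y \<in> U"
    using U(1) unfolding homeomorphism_def by auto
  have vs: "g (H (x',\<sigma>)) = v \<sigma>" using liftH_D(2)[OF v(1) s0(1) order_refl] gf[OF v(2)] by simp
  show ?thesis
  proof (cases "\<sigma>' \<le> \<sigma>")
    case True
    have HinT: "H (x',\<tau>) \<in> f ` U" if "\<tau> \<in> {\<sigma>'..\<sigma>}" for \<tau>
      using that True by (intro Hin) auto
    have "v \<sigma>' = g (H (x',\<sigma>'))"
    proof (rule uniq_interval[OF lh, of "{\<sigma>'..\<sigma>}" v "\<lambda>\<tau>. g (H (x',\<tau>))" \<sigma>])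
      show "continuous_on {\<sigma>'..\<sigma>} v" 
        using v(1) s0 unfolding liftH_def by (metis atLeastatMost_subset_iff continuous_on_subset order_refl)
      show "continuous_on {\<sigma>'..\<sigma>} (\<lambda>\<tau>. g (H (x', \<tau>)))"
        by (rule chart_comp_cont[OF U(1,2) x' HinT])
      show "v ` {\<sigma>'..\<sigma>} \<subseteq> D" using liftH_D(1)[OF v(1)] s0 by auto
      show "(\<lambda>\<tau>. g (H (x', \<tau>))) ` {\<sigma>'..\<sigma>} \<subseteq> D" using HinT gU U(3) by blast
      show "f (v \<tau>) = f (g (H (x', \<tau>)))" if "\<tau> \<in> {\<sigma>'..\<sigma>}" for \<tau>
        using that liftH_D(2)[OF v(1), of \<tau>] s0 fg[OF HinT[OF that]] by simp
    qed (use True vs in auto)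
    then show ?thesis using liftH_restrict[OF v(1) s0(2) True] by blast
  next
    case False
    have HinF: "H (x',\<tau>) \<in> f ` U" if "\<tau> \<in> {\<sigma>..\<sigma>'}" for \<tau>
      using that False by (intro Hin) auto
    define v' where "v' = (\<lambda>\<tau>. if \<tau> \<le> \<sigma> then v \<tau> else g (H (x',\<tau>)))"
    have "liftH D f H x' \<sigma>' v'"
      unfolding liftH_def
    proof (intro conjI ballI)
      have e1: "{\<tau> \<in> {0..\<sigma>'}. \<tau> \<le> \<sigma>} = {0..\<sigma>}" "{\<tau> \<in> {0..\<sigma>'}. \<sigma> \<le> \<tau>} = {\<sigma>..\<sigma>'}"
        using False s0 by auto
      have c1: "continuous_on {0..\<sigma>} v" using v(1) unfolding liftH_def by auto
      have c2: "continuous_on {\<sigma>..\<sigma>'} (\<lambda>\<tau>. g (H (x',\<tau>)))"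
        by (rule chart_comp_cont[OF U(1,2) x' HinF])
      show "continuous_on {0..\<sigma>'} v'" unfolding v'_def
        apply (rule continuous_on_cases_le[where h="\<lambda>\<tau>. \<tau>"])
           apply (simp only: e1 c1)
          apply (simp only: e1 c2)
         apply (rule continuous_on_id)
        using vs by simp
      show "v' ` {0..\<sigma>'} \<subseteq> D"
      proof
        fix y assume "y \<in> v' ` {0..\<sigma>'}"
        then obtain \<tau> where \<tau>: "\<tau> \<in> {0..\<sigma>'}" "y = v' \<tau>" by blast
        show "y \<in> D"
        proof (cases "\<tau> \<le> \<sigma>")
          case True then show ?thesis using \<tau> liftH_D(1)[OF v(1), of \<tau>] unfolding v'_def by simp
        next
          case False then show ?thesis using \<tau> HinF[of \<tau>] gU U(3) unfolding v'_def by auto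
        qed
      qed
      show "v' 0 = x'" using v(1) s0 unfolding liftH_def v'_def by simp
      fix \<tau> assume \<tau>: "\<tau> \<in> {0..\<sigma>'}"
      show "f (v' \<tau>) = H (x', \<tau>)"
      proof (cases "\<tau> \<le> \<sigma>")
        case True then show ?thesis using \<tau> liftH_D(2)[OF v(1), of \<tau>] unfolding v'_def by simp
      next
        case False then show ?thesis using \<tau> HinF[of \<tau>] fg unfolding v'_def by auto
      qed
    qed
    moreover have "v' \<sigma>' = g (H (x',\<sigma>'))" using False unfolding v'_def by auto
    ultimately show ?thesis by blast
  qed
qed

lemma gH_cont:
  assumes U: "homeomorphism U (f ` U) f g" "open (f ` U)" and x: "x \<in> D" and Hs: "H (x,s) \<in> f ` U"
  shows "isCont (\<lambda>p. g (H p)) (x,s)"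
proof -
  have "isCont g (H (x,s))"
    using homeomorphism_cont2[OF U(1)] U(2) Hs continuous_on_eq_continuous_at by blast
  then have "isCont (g \<circ> H) (x,s)" by (rule continuous_at_compose[OF Hc[OF x]])
  then show ?thesis by (simp add: o_def)
qed

lemma core:
  assumes u: "liftH D f H x t u" and t: "0 \<le> t"
  shows "\<forall>\<epsilon>>0. \<exists>\<delta>>0. \<forall>x'. dist x' x < \<delta> \<longrightarrow> x' \<in> D \<and> (\<exists>v. liftH D f H x' t v \<and> dist (v t) (u t) < \<epsilon>)"
proof -
  define G where "G s \<longleftrightarrow> (\<forall>\<epsilon>>0. \<exists>\<delta>>0. \<forall>x'. dist x' x < \<delta> \<longrightarrow> x' \<in> D \<and> (\<exists>v. liftH D f H x' s v \<and> dist (v s) (u s) < \<epsilon>))" for s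
  have u0: "u 0 = x" using u unfolding liftH_def by simp
  have x: "x \<in> D" using liftH_D(1)[OF u order_refl t] u0 by simp
  have G0: "G 0"
    unfolding G_def
  proof (intro allI impI)
    fix \<epsilon> :: real assume e: "\<epsilon> > 0"
    obtain r where r: "r > 0" "ball x r \<subseteq> D" using oD x open_contains_ball by blast
    show "\<exists>\<delta>>0. \<forall>x'. dist x' x < \<delta> \<longrightarrow> x' \<in> D \<and> (\<exists>v. liftH D f H x' 0 v \<and> dist (v 0) (u 0) < \<epsilon>)"
    proof (intro exI[of _ "min \<epsilon> r"] conjI allI impI)
      fix x' assume a: "dist x' x < min \<epsilon> r"
      then have "x' \<in> ball x r" by (simp add: dist_commute)
      then show x'D: "x' \<in> D" using r by blast
      have "liftH D f H x' 0 (\<lambda>_. x')" unfolding liftH_def using H0[OF x'D] x'D by simp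
      moreover have "dist ((\<lambda>_. x') 0) (u 0) < \<epsilon>" using a u0 by simp
      ultimately show "\<exists>v. liftH D f H x' 0 v \<and> dist (v 0) (u 0) < \<epsilon>" by blast
    qed (use e r in simp)
  qed
  have loc: "\<exists>r>0. \<forall>\<sigma> \<sigma>'. \<sigma> \<in> {0..t} \<longrightarrow> \<sigma>' \<in> {0..t} \<longrightarrow> \<bar>\<sigma> - s\<bar> < r \<longrightarrow> \<bar>\<sigma>' - s\<bar> < r \<longrightarrow> G \<sigma> \<longrightarrow> G \<sigma>'"
    if s: "s \<in> {0..t}" for s
  proof -
    define z where "z = u s"
    have zD: "z \<in> D" and fz: "f z = H (x,s)" using liftH_D[OF u, of s] s by (auto simp: z_def)
    obtain U g where U: "open U" "z \<in> U" "U \<subseteq> D" "open (f ` U)" "homeomorphism U (f ` U) f g"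
      using lh_chart[OF lh zD] by blast
    have gf: "\<And>y. y \<in> U \<Longrightarrow> g (f y) = y" and fg: "\<And>y. y \<in> f ` U \<Longrightarrow> f (g y) = y"
      and gU: "\<And>y. y \<in> f ` U \<Longrightarrow> g y \<in> U"
      using U(5) unfolding homeomorphism_def by auto
    have Hs: "H (x,s) \<in> f ` U" using fz U(2) by (metis imageI)
    obtain r where r: "r > 0" "\<forall>x' \<tau>. dist x' x < r \<and> \<bar>\<tau> - s\<bar> < r \<longrightarrow> x' \<in> D \<and> H (x',\<tau>) \<in> f ` U"
      using window[OF x U(4) Hs] by blast
    define J where "J = {\<tau>. 0 \<le> \<tau> \<and> \<tau> \<le> t \<and> \<bar>\<tau> - s\<bar> < r}"
    have JS: "J \<subseteq> {0..t}" unfolding J_def by auto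
    have HJ: "H (x,\<tau>) \<in> f ` U" if "\<tau> \<in> J" for \<tau> using that r unfolding J_def by simp
    have uJ: "u \<tau> = g (H (x,\<tau>))" if "\<tau> \<in> J" for \<tau>
    proof (rule uniq_interval[OF lh, of J u "\<lambda>\<tau>. g (H (x,\<tau>))" s])
      show "is_interval J" unfolding J_def is_interval_1 by auto
      show "continuous_on J u" using u JS unfolding liftH_def using continuous_on_subset by blast
      show "continuous_on J (\<lambda>\<tau>. g (H (x,\<tau>)))" by (rule chart_comp_cont[OF U(5) U(4) x HJ])
      show "u ` J \<subseteq> D" using u JS unfolding liftH_def by blast
      show "(\<lambda>\<tau>. g (H (x,\<tau>))) ` J \<subseteq> D" using HJ gU U(3) by blast
      show "f (u \<tau>) = f (g (H (x,\<tau>)))" if "\<tau> \<in> J" for \<tau>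
        using liftH_D(2)[OF u, of \<tau>] that JS fg[OF HJ[OF that]] by auto
      show "s \<in> J" using s r(1) unfolding J_def by simp
      show "u s = g (H (x,s))" using gf[OF U(2)] fz z_def by simp
      show "\<tau> \<in> J" by fact
    qed
    show ?thesis
    proof (intro exI[of _ r] conjI allI impI)
      fix \<sigma> \<sigma>' assume a: "\<sigma> \<in> {0..t}" "\<sigma>' \<in> {0..t}" "\<bar>\<sigma> - s\<bar> < r" "\<bar>\<sigma>' - s\<bar> < r" "G \<sigma>"
      have \<sigma>J: "\<sigma> \<in> J" "\<sigma>' \<in> J" using a unfolding J_def by auto
      have u\<sigma>: "u \<sigma> \<in> U" using uJ[OF \<sigma>J(1)] gU[OF HJ[OF \<sigma>J(1)]] by simp
      show "G \<sigma>'" unfolding G_def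
      proof (intro allI impI)
        fix \<epsilon> :: real assume e: "\<epsilon> > 0"
        obtain \<rho> where \<rho>: "\<rho> > 0" "ball (u \<sigma>) \<rho> \<subseteq> U" using U(1) u\<sigma> open_contains_ball by blast
        obtain \<delta>1 where \<delta>1: "\<delta>1 > 0" "\<forall>x'. dist x' x < \<delta>1 \<longrightarrow> x' \<in> D \<and> (\<exists>v. liftH D f H x' \<sigma> v \<and> dist (v \<sigma>) (u \<sigma>) < \<rho>)"
          using a(5) \<rho>(1) unfolding G_def by blast
        obtain \<kappa> where \<kappa>: "\<kappa> > 0" "\<forall>x' \<tau>. dist x' x < \<kappa> \<and> \<bar>\<tau> - \<sigma>'\<bar> < \<kappa> \<longrightarrow> dist (g (H (x',\<tau>))) (g (H (x,\<sigma>'))) < \<epsilon>"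
          using pair_cont_metric[OF gH_cont[OF U(5) U(4) x HJ[OF \<sigma>J(2)]] e] by auto
        show "\<exists>\<delta>>0. \<forall>x'. dist x' x < \<delta> \<longrightarrow> x' \<in> D \<and> (\<exists>v. liftH D f H x' \<sigma>' v \<and> dist (v \<sigma>') (u \<sigma>') < \<epsilon>)"
        proof (intro exI[of _ "min (min \<delta>1 \<kappa>) r"] conjI allI impI)
          fix x' assume dx: "dist x' x < min (min \<delta>1 \<kappa>) r"
          then obtain v where x'D: "x' \<in> D" and v: "liftH D f H x' \<sigma> v" "dist (v \<sigma>) (u \<sigma>) < \<rho>"
            using \<delta>1(2) by auto
          show "x' \<in> D" by fact
          have "v \<sigma> \<in> ball (u \<sigma>) \<rho>" using v(2) by (simp add: dist_commute)
          then have v\<sigma>: "v \<sigma> \<in> U" using \<rho>(2) by blast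
          have Hin: "H (x',\<tau>) \<in> f ` U" if "min \<sigma> \<sigma>' \<le> \<tau>" "\<tau> \<le> max \<sigma> \<sigma>'" for \<tau>
          proof -
            have "\<bar>\<tau> - s\<bar> < r" using that a(3,4) by (auto simp: min_def max_def split: if_splits)
            then show ?thesis using r(2) dx by simp
          qed
          obtain v' where v': "liftH D f H x' \<sigma>' v'" "v' \<sigma>' = g (H (x',\<sigma>'))"
            using step[OF U(5) U(4) U(3) x'D v(1) v\<sigma> _ _ Hin] a(1,2) by auto
          have "dist x' x < \<kappa>" using dx by simp
          then have "dist (g (H (x',\<sigma>'))) (g (H (x,\<sigma>'))) < \<epsilon>" using \<kappa> by simp
          then have "dist (v' \<sigma>') (u \<sigma>') < \<epsilon>" using v'(2) uJ[OF \<sigma>J(2)] by simp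
          then show "\<exists>v. liftH D f H x' \<sigma>' v \<and> dist (v \<sigma>') (u \<sigma>') < \<epsilon>" using v'(1) by blast
        qed (use \<delta>1 \<kappa> r in simp)
      qed
    qed (use r in simp)
  qed
  define S where "S = {s \<in> {0..t}. G s}"
  have op: "openin (top_of_set {0..t}) S"
    unfolding openin_euclidean_subtopology_iff
  proof (intro conjI ballI)
    show "S \<subseteq> {0..t}" unfolding S_def by blast
    fix s assume sS: "s \<in> S"
    then obtain r where r: "r > 0" "\<forall>\<sigma> \<sigma>'. \<sigma> \<in> {0..t} \<longrightarrow> \<sigma>' \<in> {0..t} \<longrightarrow> \<bar>\<sigma> - s\<bar> < r \<longrightarrow> \<bar>\<sigma>' - s\<bar> < r \<longrightarrow> G \<sigma> \<longrightarrow> G \<sigma>'"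
      using loc[of s] sS unfolding S_def by blast
    show "\<exists>e>0. \<forall>x'\<in>{0..t}. dist x' s < e \<longrightarrow> x' \<in> S"
    proof (intro exI[of _ r] conjI ballI impI)
      fix x' assume "x' \<in> {0..t}" "dist x' s < r"
      note h = this
      have "s \<in> {0..t}" "G s" using sS unfolding S_def by auto
      moreover have "\<bar>x' - s\<bar> < r" using h(2) unfolding dist_real_def .
      ultimately have "G x'" using r(2)[rule_format, of s x'] r(1) h(1) by simp
      then show "x' \<in> S" using h(1) unfolding S_def by simp
    qed (use r in simp)
  qed
  have cl: "closedin (top_of_set {0..t}) S"
    unfolding closedin_limpt
  proof (intro conjI allI impI)
    show "S \<subseteq> {0..t}" unfolding S_def by blast
    fix s assume sl: "s islimpt S \<and> s \<in> {0..t}"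
    then obtain r where r: "r > 0" "\<forall>\<sigma> \<sigma>'. \<sigma> \<in> {0..t} \<longrightarrow> \<sigma>' \<in> {0..t} \<longrightarrow> \<bar>\<sigma> - s\<bar> < r \<longrightarrow> \<bar>\<sigma>' - s\<bar> < r \<longrightarrow> G \<sigma> \<longrightarrow> G \<sigma>'"
      using loc[OF conjunct2[OF sl]] by blast
    have "\<exists>\<sigma>\<in>S. \<sigma> \<noteq> s \<and> dist \<sigma> s < r" using conjunct1[OF sl] r(1) by (simp add: islimpt_approachable)
    then obtain \<sigma> where "\<sigma> \<in> S" "dist \<sigma> s < r" by blast
    note h = this
    have "\<sigma> \<in> {0..t}" "G \<sigma>" using h(1) unfolding S_def by auto
    moreover have "\<bar>\<sigma> - s\<bar> < r" using h(2) unfolding dist_real_def .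
    ultimately have "G s" using r(2)[rule_format, of \<sigma> s] r(1) sl by simp
    then show "s \<in> S" using sl unfolding S_def by simp
  qed
  have "S = {} \<or> S = {0..t}"
    using connected_clopen[THEN iffD1, OF connected_Icc, rule_format, OF conjI[OF op cl]] .
  moreover have "0 \<in> S" using G0 t unfolding S_def by simp
  ultimately have "t \<in> S" using t by auto
  then have "G t" unfolding S_def by simp
  then show ?thesis unfolding G_def .
qed

lemma dir:
  assumes u: "liftH D f H x t u" and t: "0 \<le> t" and e: "\<epsilon> > 0"
  shows "\<exists>\<delta>>0. \<forall>x' t'. dist x' x < \<delta> \<longrightarrow> 0 \<le> t' \<longrightarrow> \<bar>t' - t\<bar> < \<delta> \<longrightarrow>
           x' \<in> D \<and> (\<exists>v. liftH D f H x' t' v \<and> dist (v t') (u t) < \<epsilon>)"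
proof -
  have u0: "u 0 = x" using u unfolding liftH_def by simp
  have x: "x \<in> D" using liftH_D(1)[OF u order_refl t] u0 by simp
  define z where "z = u t"
  have zD: "z \<in> D" and fz: "f z = H (x,t)" using liftH_D[OF u, of t] t by (auto simp: z_def)
  obtain U g where U: "open U" "z \<in> U" "U \<subseteq> D" "open (f ` U)" "homeomorphism U (f ` U) f g"
    using lh_chart[OF lh zD] by blast
  have gf: "\<And>y. y \<in> U \<Longrightarrow> g (f y) = y"
    using U(5) unfolding homeomorphism_def by auto
  have Hs: "H (x,t) \<in> f ` U" using fz U(2) by (metis imageI)
  obtain r where r: "r > 0" "\<forall>x' \<tau>. dist x' x < r \<and> \<bar>\<tau> - t\<bar> < r \<longrightarrow> x' \<in> D \<and> H (x',\<tau>) \<in> f ` U"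
    using window[OF x U(4) Hs] by blast
  obtain \<kappa> where \<kappa>: "\<kappa> > 0" "\<forall>x' \<tau>. dist x' x < \<kappa> \<and> \<bar>\<tau> - t\<bar> < \<kappa> \<longrightarrow> dist (g (H (x',\<tau>))) (g (H (x,t))) < \<epsilon>"
    using pair_cont_metric[OF gH_cont[OF U(5) U(4) x Hs] e] by auto
  have gz: "g (H (x,t)) = u t" using gf[OF U(2)] fz z_def by simp
  obtain \<rho> where \<rho>: "\<rho> > 0" "ball z \<rho> \<subseteq> U" using U(1,2) open_contains_ball by blast
  obtain \<delta>1 where \<delta>1: "\<delta>1 > 0" "\<forall>x'. dist x' x < \<delta>1 \<longrightarrow> x' \<in> D \<and> (\<exists>v. liftH D f H x' t v \<and> dist (v t) (u t) < \<rho>)"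
    using core[OF u t] \<rho>(1) by blast
  show ?thesis
  proof (intro exI[of _ "min (min \<delta>1 \<kappa>) r"] conjI allI impI)
    fix x' t' assume dx: "dist x' x < min (min \<delta>1 \<kappa>) r" and t': "0 \<le> t'" "\<bar>t' - t\<bar> < min (min \<delta>1 \<kappa>) r"
    have "dist x' x < \<delta>1" using dx by simp
    then obtain v where x'D: "x' \<in> D" and v: "liftH D f H x' t v" "dist (v t) (u t) < \<rho>"
      using \<delta>1(2) by blast
    show "x' \<in> D" by fact
    have "v t \<in> ball z \<rho>" using v(2) z_def by (simp add: dist_commute)
    then have vt: "v t \<in> U" using \<rho>(2) by blast
    have Hin: "H (x',\<tau>) \<in> f ` U" if "min t t' \<le> \<tau>" "\<tau> \<le> max t t'" for \<tau>
    proof -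
      have "\<bar>\<tau> - t\<bar> < r" using that t' by (auto simp: min_def max_def split: if_splits)
      moreover have "dist x' x < r" using dx by simp
      ultimately show ?thesis using r(2) by blast
    qed
    obtain v' where v': "liftH D f H x' t' v'" "v' t' = g (H (x',t'))"
      using step[OF U(5) U(4) U(3) x'D v(1) vt t t'(1) Hin] by blast
    have "dist x' x < \<kappa>" "\<bar>t' - t\<bar> < \<kappa>" using dx t' by simp_all
    then have "dist (g (H (x',t'))) (g (H (x,t))) < \<epsilon>" using \<kappa>(2) by blast
    then have "dist (v' t') (u t) < \<epsilon>" using v'(2) gz by simp
    then show "\<exists>v. liftH D f H x' t' v \<and> dist (v t') (u t) < \<epsilon>" using v'(1) by blast
  qed (use \<delta>1 \<kappa> r in simp)
qed

end

definition lift :: "'a::metric_space set \<Rightarrow> ('a \<Rightarrow> 'b::real_normed_vector) \<Rightarrow> 'a \<Rightarrow> 'a \<Rightarrow> real set \<Rightarrow> (real \<Rightarrow> 'a) \<Rightarrow> bool" where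
  "lift D f x0 x J u \<longleftrightarrow> is_interval J \<and> 0 \<in> J \<and> continuous_on J u \<and> u ` J \<subseteq> D \<and> u 0 = x \<and>
     (\<forall>s\<in>J. f (u s) = Psi (f x0) (f x) s)"

definition WW :: "'a::metric_space set \<Rightarrow> ('a \<Rightarrow> 'b::real_normed_vector) \<Rightarrow> 'a \<Rightarrow> ('a \<times> real) set" where
  "WW D f x0 = {(x,t). \<exists>J u. lift D f x0 x J u \<and> t \<in> J}"

definition PP :: "'a::metric_space set \<Rightarrow> ('a \<Rightarrow> 'b::real_normed_vector) \<Rightarrow> 'a \<Rightarrow> 'a \<times> real \<Rightarrow> 'a" where
  "PP D f x0 p = (SOME y. \<exists>J u. lift D f x0 (fst p) J u \<and> snd p \<in> J \<and> u (snd p) = y)"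

lemma Psi_0[simp]: "Psi y0 y 0 = y" by (simp add: Psi_def)

lemma Psi_add: "Psi y0 y (a + b) = Psi y0 (Psi y0 y a) b"
  by (simp add: Psi_def exp_add[symmetric] algebra_simps)

context
  fixes D :: "'a::metric_space set" and f :: "'a \<Rightarrow> 'b::real_normed_vector" and x0 :: 'a
  assumes oD: "open D" and lh: "local_homeo_on D f"
begin

lemma lift_agree:
  assumes A: "lift D f x0 x J1 u1" and B: "lift D f x0 x J2 u2" and t: "t \<in> J1" "t \<in> J2"
  shows "u1 t = u2 t"
proof (rule uniq_interval[OF lh, of "J1 \<inter> J2" u1 u2 0])
  show "is_interval (J1 \<inter> J2)" using A B unfolding lift_def by (simp add: is_interval_Int)
  show "continuous_on (J1 \<inter> J2) u1" using A unfolding lift_def by (meson continuous_on_subset inf_le1)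
  show "continuous_on (J1 \<inter> J2) u2" using B unfolding lift_def by (meson continuous_on_subset inf_le2)
  show "u1 ` (J1 \<inter> J2) \<subseteq> D" using A unfolding lift_def by blast
  show "u2 ` (J1 \<inter> J2) \<subseteq> D" using B unfolding lift_def by blast
  show "f (u1 s) = f (u2 s)" if "s \<in> J1 \<inter> J2" for s using A B that unfolding lift_def by simp
  show "0 \<in> J1 \<inter> J2" using A B unfolding lift_def by simp
  show "u1 0 = u2 0" using A B unfolding lift_def by simp
  show "t \<in> J1 \<inter> J2" using t by simp
qed

lemma PP_eq:
  assumes A: "lift D f x0 x J u" and t: "t \<in> J"
  shows "(x,t) \<in> WW D f x0" "PP D f x0 (x,t) = u t"
proof -
  show "(x,t) \<in> WW D f x0" using A t unfolding WW_def by blast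
  let ?P = "\<lambda>y. \<exists>J u. lift D f x0 x J u \<and> t \<in> J \<and> u t = y"
  have "?P (u t)" using A t by blast
  then have "?P (SOME y. ?P y)" by (rule someI)
  then obtain J' u' where B: "lift D f x0 x J' u'" "t \<in> J'" "u' t = (SOME y. ?P y)" by blast
  have "u' t = u t" using lift_agree[OF B(1) A B(2) t] .
  then show "PP D f x0 (x,t) = u t" using B(3) unfolding PP_def by simp
qed

lemma WW_E:
  assumes "(x,t) \<in> WW D f x0"
  obtains J u where "lift D f x0 x J u" "t \<in> J"
  using assms unfolding WW_def by blast

lemma PP_f:
  assumes "(x,t) \<in> WW D f x0"
  shows "f (PP D f x0 (x,t)) = Psi (f x0) (f x) t" "PP D f x0 (x,t) \<in> D" "x \<in> D"
proof -
  obtain J u where A: "lift D f x0 x J u" "t \<in> J" using WW_E[OF assms] by blast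
  have "PP D f x0 (x,t) = u t" using PP_eq[OF A] by simp
  then show "f (PP D f x0 (x,t)) = Psi (f x0) (f x) t" "PP D f x0 (x,t) \<in> D"
    using A unfolding lift_def by auto
  show "x \<in> D" using A unfolding lift_def by (metis image_subset_iff)
qed

lemma isCont_f_fst:
  assumes x: "x \<in> D" shows "isCont (\<lambda>p. f (fst p)) (x,s)"
proof -
  have "isCont (f \<circ> fst) (x,s)"
  proof (rule continuous_at_compose)
    show "isCont fst (x,s)" by (intro continuous_intros)
    show "isCont f (fst (x,s))" using lh_cont[OF lh x] by simp
  qed
  then show ?thesis by (simp add: o_def)
qed

lemma Hc1: "x \<in> D \<Longrightarrow> isCont (\<lambda>p. Psi (f x0) (f (fst p)) (snd p)) (x,s)"
  unfolding Psi_def by (intro continuous_intros isCont_f_fst)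

lemma Hc2: "x \<in> D \<Longrightarrow> isCont (\<lambda>p. Psi (f x0) (f (fst p)) (- snd p)) (x,s)"
  unfolding Psi_def by (intro continuous_intros isCont_f_fst)

abbreviation "H1 \<equiv> (\<lambda>p. Psi (f x0) (f (fst p)) (snd p))"
abbreviation "H2 \<equiv> (\<lambda>p. Psi (f x0) (f (fst p)) (- snd p))"

lemma lift_of_liftH1: "liftH D f H1 x a v \<Longrightarrow> 0 \<le> a \<Longrightarrow> lift D f x0 x {0..a} v"
  unfolding liftH_def lift_def by (simp add: is_interval_cc)

lemma liftH1_of_lift:
  assumes A: "lift D f x0 x J u" and t: "t \<in> J" "0 \<le> t"
  shows "liftH D f H1 x t u"
proof -
  have s: "{0..t} \<subseteq> J" using A t unfolding lift_def is_interval_1 by auto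
  then show ?thesis using A unfolding lift_def liftH_def by (auto intro: continuous_on_subset)
qed

lemma lift_of_liftH2:
  assumes "liftH D f H2 x a v" "0 \<le> a"
  shows "lift D f x0 x {-a..0} (\<lambda>s. v (-s))"
  unfolding lift_def
proof (intro conjI ballI)
  have c: "continuous_on {0..a} v" and im: "v ` {0..a} \<subseteq> D" and v0: "v 0 = x"
    and fv: "\<forall>\<sigma>\<in>{0..a}. f (v \<sigma>) = H2 (x,\<sigma>)" using assms(1) unfolding liftH_def by auto
  have m: "uminus ` {-a..0} \<subseteq> {0..a}" by auto
  show "continuous_on {-a..0} (\<lambda>s. v (-s))"
    by (rule continuous_on_compose2[OF c _ m]) (intro continuous_intros)
  show "(\<lambda>s. v (-s)) ` {-a..0} \<subseteq> D" using im m by auto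
  show "v (-0) = x" using v0 by simp
  show "is_interval {-a..0}" by (simp add: is_interval_cc)
  show "0 \<in> {-a..0}" using assms(2) by simp
  fix s :: real assume "s \<in> {-a..0}"
  then have "-s \<in> {0..a}" by auto
  then show "f (v (-s)) = Psi (f x0) (f x) s" using fv by auto
qed

lemma liftH2_of_lift:
  assumes A: "lift D f x0 x J u" and t: "t \<in> J" "t \<le> 0"
  shows "liftH D f H2 x (-t) (\<lambda>s. u (-s))"
proof -
  have s: "{t..0} \<subseteq> J" using A t unfolding lift_def is_interval_1 by auto
  have m: "uminus ` {0..-t} \<subseteq> J" using s by auto
  have c: "continuous_on J u" using A unfolding lift_def by simp
  show ?thesis unfolding liftH_def
  proof (intro conjI ballI)
    show "continuous_on {0..-t} (\<lambda>s. u (-s))"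
      by (rule continuous_on_compose2[OF c _ m]) (intro continuous_intros)
    show "(\<lambda>s. u (-s)) ` {0..-t} \<subseteq> D"
    proof (rule image_subsetI)
      fix \<sigma> :: real assume "\<sigma> \<in> {0..-t}"
      then have "-\<sigma> \<in> J" using m by auto
      then show "u (-\<sigma>) \<in> D" using A unfolding lift_def by auto
    qed
    show "u (-0) = x" using A unfolding lift_def by simp
    fix \<sigma> :: real assume "\<sigma> \<in> {0..-t}"
    then have "-\<sigma> \<in> J" using m by auto
    then show "f (u (-\<sigma>)) = H2 (x,\<sigma>)" using A unfolding lift_def by simp
  qed
qed


lemma H01: "x \<in> D \<Longrightarrow> (\<lambda>p. Psi (f x0) (f (fst p)) (snd p)) (x,0) = f x" by simp
lemma H02: "x \<in> D \<Longrightarrow> (\<lambda>p. Psi (f x0) (f (fst p)) (- snd p)) (x,0) = f x" by simp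

lemma Lf:
  assumes W: "(x,t) \<in> WW D f x0" and t: "0 \<le> t" and e: "\<epsilon> > 0"
  shows "\<exists>\<delta>>0. \<forall>x' t'. dist x' x < \<delta> \<longrightarrow> 0 \<le> t' \<longrightarrow> \<bar>t' - t\<bar> < \<delta> \<longrightarrow>
     (x',t') \<in> WW D f x0 \<and> dist (PP D f x0 (x',t')) (PP D f x0 (x,t)) < \<epsilon>"
proof -
  obtain J u where A: "lift D f x0 x J u" "t \<in> J" using WW_E[OF W] by blast
  have u: "liftH D f (\<lambda>p. Psi (f x0) (f (fst p)) (snd p)) x t u" by (rule liftH1_of_lift[OF A t])
  have Pxt: "PP D f x0 (x,t) = u t" using PP_eq(2)[OF A] .
  obtain \<delta> where \<delta>: "\<delta> > 0" "\<forall>x' t'. dist x' x < \<delta> \<longrightarrow> 0 \<le> t' \<longrightarrow> \<bar>t' - t\<bar> < \<delta> \<longrightarrow> x' \<in> D \<and>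
      (\<exists>v. liftH D f (\<lambda>p. Psi (f x0) (f (fst p)) (snd p)) x' t' v \<and> dist (v t') (u t) < \<epsilon>)"
    using dir[OF oD lh Hc1 H01 u t e] by blast
  show ?thesis
  proof (intro exI[of _ \<delta>] conjI allI impI)
    fix x' t' assume a: "dist x' x < \<delta>" "0 \<le> t'" "\<bar>t' - t\<bar> < \<delta>"
    obtain v where v: "liftH D f (\<lambda>p. Psi (f x0) (f (fst p)) (snd p)) x' t' v" "dist (v t') (u t) < \<epsilon>"
      using \<delta>(2)[rule_format, OF a(1) a(2) a(3)] by blast
    have B: "lift D f x0 x' {0..t'} v" by (rule lift_of_liftH1[OF v(1) a(2)])
    have t'in: "t' \<in> {0..t'}" using a(2) by simp
    show "(x',t') \<in> WW D f x0" using PP_eq(1)[OF B t'in] .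
    show "dist (PP D f x0 (x',t')) (PP D f x0 (x,t)) < \<epsilon>" using PP_eq(2)[OF B t'in] Pxt v(2) by simp
  qed (use \<delta> in simp)
qed

lemma Lb:
  assumes W: "(x,t) \<in> WW D f x0" and t: "t \<le> 0" and e: "\<epsilon> > 0"
  shows "\<exists>\<delta>>0. \<forall>x' t'. dist x' x < \<delta> \<longrightarrow> t' \<le> 0 \<longrightarrow> \<bar>t' - t\<bar> < \<delta> \<longrightarrow>
     (x',t') \<in> WW D f x0 \<and> dist (PP D f x0 (x',t')) (PP D f x0 (x,t)) < \<epsilon>"
proof -
  obtain J u where A: "lift D f x0 x J u" "t \<in> J" using WW_E[OF W] by blast
  have u: "liftH D f (\<lambda>p. Psi (f x0) (f (fst p)) (- snd p)) x (-t) (\<lambda>s. u (-s))" by (rule liftH2_of_lift[OF A t])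
  have Pxt: "PP D f x0 (x,t) = u t" using PP_eq(2)[OF A] .
  have t0: "0 \<le> -t" using t by simp
  obtain \<delta> where \<delta>: "\<delta> > 0" "\<forall>x' t'. dist x' x < \<delta> \<longrightarrow> 0 \<le> t' \<longrightarrow> \<bar>t' - (-t)\<bar> < \<delta> \<longrightarrow> x' \<in> D \<and>
      (\<exists>v. liftH D f (\<lambda>p. Psi (f x0) (f (fst p)) (- snd p)) x' t' v \<and> dist (v t') (u (- (-t))) < \<epsilon>)"
    using dir[OF oD lh Hc2 H02 u t0 e] by blast
  show ?thesis
  proof (intro exI[of _ \<delta>] conjI allI impI)
    fix x' t' assume a: "dist x' x < \<delta>" "t' \<le> 0" "\<bar>t' - t\<bar> < \<delta>"
    have a': "0 \<le> -t'" "\<bar>(-t') - (-t)\<bar> < \<delta>" using a by auto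
    obtain v where v: "liftH D f (\<lambda>p. Psi (f x0) (f (fst p)) (- snd p)) x' (-t') v" "dist (v (-t')) (u (- (-t))) < \<epsilon>"
      using \<delta>(2)[rule_format, OF a(1) a'(1) a'(2)] by blast
    have B: "lift D f x0 x' {- (-t')..0} (\<lambda>s. v (-s))" by (rule lift_of_liftH2[OF v(1) a'(1)])
    have t'in: "t' \<in> {- (-t')..0}" using a(2) by simp
    show "(x',t') \<in> WW D f x0" using PP_eq(1)[OF B t'in] .
    have e1: "PP D f x0 (x',t') = v (-t')" using PP_eq(2)[OF B t'in] by (simp only:)
    have e2: "u (- (-t)) = u t" by (simp only: minus_minus)
    show "dist (PP D f x0 (x',t')) (PP D f x0 (x,t)) < \<epsilon>" using v(2) unfolding e1 Pxt e2 .
  qed (use \<delta> in simp)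
qed

lemma L:
  assumes W: "(x,t) \<in> WW D f x0" and e: "\<epsilon> > 0"
  shows "\<exists>\<delta>>0. \<forall>x' t'. dist x' x < \<delta> \<longrightarrow> \<bar>t' - t\<bar> < \<delta> \<longrightarrow>
     (x',t') \<in> WW D f x0 \<and> dist (PP D f x0 (x',t')) (PP D f x0 (x,t)) < \<epsilon>"
proof -
  consider "t > 0" | "t < 0" | "t = 0" by linarith
  then show ?thesis
  proof cases
    case 1
    obtain \<delta> where \<delta>: "\<delta> > 0" "\<forall>x' t'. dist x' x < \<delta> \<longrightarrow> 0 \<le> t' \<longrightarrow> \<bar>t' - t\<bar> < \<delta> \<longrightarrow>
      (x',t') \<in> WW D f x0 \<and> dist (PP D f x0 (x',t')) (PP D f x0 (x,t)) < \<epsilon>"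
      using Lf[OF W _ e] 1 by auto
    show ?thesis
    proof (intro exI[of _ "min \<delta> t"] conjI allI impI)
      fix x' t' assume a: "dist x' x < min \<delta> t" "\<bar>t' - t\<bar> < min \<delta> t"
      have "dist x' x < \<delta>" "0 \<le> t'" "\<bar>t' - t\<bar> < \<delta>" using a by auto
      note h = \<delta>(2)[rule_format, OF this]
      show "(x',t') \<in> WW D f x0" using h by blast
      show "dist (PP D f x0 (x',t')) (PP D f x0 (x,t)) < \<epsilon>" using h by blast
    qed (use \<delta> 1 in simp)
  next
    case 2
    obtain \<delta> where \<delta>: "\<delta> > 0" "\<forall>x' t'. dist x' x < \<delta> \<longrightarrow> t' \<le> 0 \<longrightarrow> \<bar>t' - t\<bar> < \<delta> \<longrightarrow>
      (x',t') \<in> WW D f x0 \<and> dist (PP D f x0 (x',t')) (PP D f x0 (x,t)) < \<epsilon>"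
      using Lb[OF W _ e] 2 by auto
    show ?thesis
    proof (intro exI[of _ "min \<delta> (-t)"] conjI allI impI)
      fix x' t' assume a: "dist x' x < min \<delta> (-t)" "\<bar>t' - t\<bar> < min \<delta> (-t)"
      have "dist x' x < \<delta>" "t' \<le> 0" "\<bar>t' - t\<bar> < \<delta>" using a by auto
      note h = \<delta>(2)[rule_format, OF this]
      show "(x',t') \<in> WW D f x0" using h by blast
      show "dist (PP D f x0 (x',t')) (PP D f x0 (x,t)) < \<epsilon>" using h by blast
    qed (use \<delta> 2 in simp)
  next
    case 3
    obtain \<delta>1 where \<delta>1: "\<delta>1 > 0" "\<forall>x' t'. dist x' x < \<delta>1 \<longrightarrow> 0 \<le> t' \<longrightarrow> \<bar>t' - t\<bar> < \<delta>1 \<longrightarrow>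
      (x',t') \<in> WW D f x0 \<and> dist (PP D f x0 (x',t')) (PP D f x0 (x,t)) < \<epsilon>"
      using Lf[OF W _ e] 3 by auto
    obtain \<delta>2 where \<delta>2: "\<delta>2 > 0" "\<forall>x' t'. dist x' x < \<delta>2 \<longrightarrow> t' \<le> 0 \<longrightarrow> \<bar>t' - t\<bar> < \<delta>2 \<longrightarrow>
      (x',t') \<in> WW D f x0 \<and> dist (PP D f x0 (x',t')) (PP D f x0 (x,t)) < \<epsilon>"
      using Lb[OF W _ e] 3 by auto
    show ?thesis
    proof (intro exI[of _ "min \<delta>1 \<delta>2"] conjI allI impI)
      fix x' t' assume a: "dist x' x < min \<delta>1 \<delta>2" "\<bar>t' - t\<bar> < min \<delta>1 \<delta>2"
      have "(x',t') \<in> WW D f x0 \<and> dist (PP D f x0 (x',t')) (PP D f x0 (x,t)) < \<epsilon>"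
      proof (cases "0 \<le> t'")
        case True
        have "dist x' x < \<delta>1" "0 \<le> t'" "\<bar>t' - t\<bar> < \<delta>1" using a True by auto
        then show ?thesis using \<delta>1(2)[rule_format] by blast
      next
        case False
        have "dist x' x < \<delta>2" "t' \<le> 0" "\<bar>t' - t\<bar> < \<delta>2" using a False by auto
        then show ?thesis using \<delta>2(2)[rule_format] by blast
      qed
      then show "(x',t') \<in> WW D f x0" "dist (PP D f x0 (x',t')) (PP D f x0 (x,t)) < \<epsilon>" by blast+
    qed (use \<delta>1 \<delta>2 in simp)
  qed
qed

lemma dist_pair_le: "dist x' x \<le> dist (x',t') (x,t)" "\<bar>t' - t\<bar> \<le> dist (x',t') (x,t)"
  using dist_fst_le[of "(x',t')" "(x,t)"] dist_snd_le[of "(x',t')" "(x,t)"] by (simp_all add: dist_real_def)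

lemma WW_open: "open (WW D f x0)"
  unfolding open_dist
proof (intro ballI)
  fix p assume p: "p \<in> WW D f x0"
  obtain x t where pxt: "p = (x,t)" by (cases p)
  obtain \<delta> where \<delta>: "\<delta> > 0" "\<forall>x' t'. dist x' x < \<delta> \<longrightarrow> \<bar>t' - t\<bar> < \<delta> \<longrightarrow>
     (x',t') \<in> WW D f x0 \<and> dist (PP D f x0 (x',t')) (PP D f x0 (x,t)) < 1"
    using L[OF p[unfolded pxt] zero_less_one] by blast
  show "\<exists>e>0. \<forall>y. dist y p < e \<longrightarrow> y \<in> WW D f x0"
  proof (intro exI[of _ \<delta>] conjI allI impI)
    fix y assume y: "dist y p < \<delta>"
    obtain x' t' where yy: "y = (x',t')" by (cases y)
    have "dist x' x < \<delta>" "\<bar>t' - t\<bar> < \<delta>" using dist_pair_le[where x'=x' and x=x and t'=t' and t=t] y unfolding yy pxt by linarith+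
    then show "y \<in> WW D f x0" using \<delta>(2)[rule_format] yy by blast
  qed (use \<delta> in simp)
qed

lemma PP_cont: "continuous_on (WW D f x0) (PP D f x0)"
  unfolding continuous_on_iff
proof (intro ballI allI impI)
  fix p and e :: real assume p: "p \<in> WW D f x0" and e: "e > 0"
  obtain x t where pxt: "p = (x,t)" by (cases p)
  obtain \<delta> where \<delta>: "\<delta> > 0" "\<forall>x' t'. dist x' x < \<delta> \<longrightarrow> \<bar>t' - t\<bar> < \<delta> \<longrightarrow>
     (x',t') \<in> WW D f x0 \<and> dist (PP D f x0 (x',t')) (PP D f x0 (x,t)) < e"
    using L[OF p[unfolded pxt] e] by blast
  show "\<exists>d>0. \<forall>y\<in>WW D f x0. dist y p < d \<longrightarrow> dist (PP D f x0 y) (PP D f x0 p) < e"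
  proof (intro exI[of _ \<delta>] conjI ballI impI)
    fix y assume "y \<in> WW D f x0" and y: "dist y p < \<delta>"
    obtain x' t' where yy: "y = (x',t')" by (cases y)
    have "dist x' x < \<delta>" "\<bar>t' - t\<bar> < \<delta>" using dist_pair_le[where x'=x' and x=x and t'=t' and t=t] y unfolding yy pxt by linarith+
    then show "dist (PP D f x0 y) (PP D f x0 p) < e" using \<delta>(2)[rule_format] yy pxt by blast
  qed (use \<delta> in simp)
qed

lemma WW_sub: "WW D f x0 \<subseteq> D \<times> UNIV"
  using PP_f(3) by auto

lemma WW_interval: "is_interval {t. (x,t) \<in> WW D f x0}"
  unfolding is_interval_1
proof (intro ballI allI impI)
  fix a b y assume a: "a \<in> {t. (x,t) \<in> WW D f x0}" and b: "b \<in> {t. (x,t) \<in> WW D f x0}" and y: "a \<le> y \<and> y \<le> b"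
  obtain Ja ua where A: "lift D f x0 x Ja ua" "a \<in> Ja" using a WW_E by blast
  obtain Jb ub where B: "lift D f x0 x Jb ub" "b \<in> Jb" using b WW_E by blast
  show "y \<in> {t. (x,t) \<in> WW D f x0}"
  proof (cases "0 \<le> y")
    case True
    have "0 \<in> Jb" "is_interval Jb" using B unfolding lift_def by auto
    then have "y \<in> Jb" using B(2) True y unfolding is_interval_1 by blast
    then show ?thesis using PP_eq(1)[OF B(1)] by blast
  next
    case False
    have "0 \<in> Ja" "is_interval Ja" using A unfolding lift_def by auto
    then have "y \<in> Ja" using A(2) False y unfolding is_interval_1 by (meson linear)
    then show ?thesis using PP_eq(1)[OF A(1)] by blast
  qed
qed

lemma lift_const: "x \<in> D \<Longrightarrow> lift D f x0 x {0} (\<lambda>_. x)"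
  unfolding lift_def by (auto simp: is_interval_1)

lemma W0: "x \<in> D \<Longrightarrow> (x,0) \<in> WW D f x0" "x \<in> D \<Longrightarrow> PP D f x0 (x,0) = x"
  using PP_eq[OF lift_const] by auto

lemma lift_W:
  assumes "x \<in> D"
  shows "lift D f x0 x {t. (x,t) \<in> WW D f x0} (\<lambda>s. PP D f x0 (x,s))"
  unfolding lift_def
proof (intro conjI ballI)
  show "is_interval {t. (x, t) \<in> WW D f x0}" by (rule WW_interval)
  show "0 \<in> {t. (x, t) \<in> WW D f x0}" using W0 assms by simp
  show "continuous_on {t. (x, t) \<in> WW D f x0} (\<lambda>s. PP D f x0 (x, s))"
    by (rule continuous_on_compose2[OF PP_cont]) (intro continuous_intros, blast)
  show "(\<lambda>s. PP D f x0 (x, s)) ` {t. (x, t) \<in> WW D f x0} \<subseteq> D" using PP_f(2) by blast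
  show "PP D f x0 (x, 0) = x" using W0 assms by simp
  fix s assume "s \<in> {t. (x, t) \<in> WW D f x0}"
  then show "f (PP D f x0 (x, s)) = Psi (f x0) (f x) s" using PP_f(1) by simp
qed

lemma WW_flow: "is_flow D (WW D f x0) (PP D f x0)"
  unfolding is_flow_def
proof (intro conjI ballI allI impI)
  show "openin (top_of_set (D \<times> UNIV)) (WW D f x0)"
    using openin_open_eq[OF open_Times[OF oD open_UNIV]] WW_open WW_sub by blast
  show "continuous_on (WW D f x0) (PP D f x0)" by (rule PP_cont)
  show "PP D f x0 ` WW D f x0 \<subseteq> D" using PP_f(2) by auto
  fix x assume x: "x \<in> D"
  show "is_interval {t. (x,t) \<in> WW D f x0}" by (rule WW_interval)
  show "(x,0) \<in> WW D f x0" "PP D f x0 (x,0) = x" using W0 x by auto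
next
  fix x t1 t2 assume a: "(x,t1) \<in> WW D f x0" "(x, t1 + t2) \<in> WW D f x0"
  have x: "x \<in> D" using PP_f(3)[OF a(1)] .
  define K where "K = {t. (x,t) \<in> WW D f x0}"
  define w where "w = (\<lambda>s. PP D f x0 (x,s))"
  have lw: "lift D f x0 x K w" using lift_W[OF x] unfolding K_def w_def .
  define K' where "K' = {s. t1 + s \<in> K}"
  define v where "v = (\<lambda>s. w (t1 + s))"
  have lv: "lift D f x0 (PP D f x0 (x,t1)) K' v"
    unfolding lift_def
  proof (intro conjI ballI)
    have iK: "is_interval K" and cK: "continuous_on K w" and iD: "w ` K \<subseteq> D"
      and fw: "\<forall>s\<in>K. f (w s) = Psi (f x0) (f x) s"
      using lw unfolding lift_def by auto
    show "is_interval K'" unfolding K'_def is_interval_1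
    proof (intro ballI allI impI)
      fix a b y assume "a \<in> {s. t1 + s \<in> K}" "b \<in> {s. t1 + s \<in> K}" "a \<le> y \<and> y \<le> b"
      then have "t1 + a \<in> K" "t1 + b \<in> K" "t1 + a \<le> t1 + y" "t1 + y \<le> t1 + b" by auto
      then have "t1 + y \<in> K" using iK unfolding is_interval_1 by blast
      then show "y \<in> {s. t1 + s \<in> K}" by simp
    qed
    show "0 \<in> K'" using a(1) unfolding K'_def K_def by simp
    have m: "(\<lambda>s. t1 + s) ` K' \<subseteq> K" unfolding K'_def by auto
    show "continuous_on K' v" unfolding v_def
      by (rule continuous_on_compose2[OF cK _ m]) (intro continuous_intros)
    show "v ` K' \<subseteq> D" using iD m unfolding v_def by auto
    show "v 0 = PP D f x0 (x, t1)" unfolding v_def w_def by simp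
    fix s assume "s \<in> K'"
    then have "t1 + s \<in> K" unfolding K'_def by simp
    then have "f (v s) = Psi (f x0) (f x) (t1 + s)" using fw unfolding v_def by simp
    also have "\<dots> = Psi (f x0) (Psi (f x0) (f x) t1) s" by (rule Psi_add)
    also have "Psi (f x0) (f x) t1 = f (PP D f x0 (x,t1))" using PP_f(1)[OF a(1)] by simp
    finally show "f (v s) = Psi (f x0) (f (PP D f x0 (x, t1))) s" .
  qed
  have t2: "t2 \<in> K'" using a(2) unfolding K'_def K_def by simp
  show "(PP D f x0 (x, t1), t2) \<in> WW D f x0" using PP_eq(1)[OF lv t2] .
  show "PP D f x0 (PP D f x0 (x, t1), t2) = PP D f x0 (x, t1 + t2)"
    using PP_eq(2)[OF lv t2] unfolding v_def w_def .
qed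

lemma WW_conj: "conj_flow D f x0 (WW D f x0) (PP D f x0)"
  unfolding conj_flow_def using WW_flow PP_f(1) by blast

lemma flow_lift:
  assumes C: "conj_flow D f x0 DP P" and p: "(x,t) \<in> DP"
  shows "lift D f x0 x {s. (x,s) \<in> DP} (\<lambda>s. P (x,s))" "x \<in> D"
proof -
  have F: "is_flow D DP P" and fP: "\<And>x t. (x,t) \<in> DP \<Longrightarrow> f (P (x,t)) = Psi (f x0) (f x) t"
    using C unfolding conj_flow_def by auto
  have op: "openin (top_of_set (D \<times> UNIV)) DP" and cP: "continuous_on DP P" and im: "P ` DP \<subseteq> D"
    and iv: "\<forall>x\<in>D. is_interval {t. (x, t) \<in> DP} \<and> (x, 0) \<in> DP" and P0: "\<forall>x\<in>D. P (x, 0) = x"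
    using F unfolding is_flow_def by blast+
  have sub: "DP \<subseteq> D \<times> UNIV" using op by (rule openin_imp_subset)
  show x: "x \<in> D" using sub p by auto
  show "lift D f x0 x {s. (x,s) \<in> DP} (\<lambda>s. P (x,s))"
    unfolding lift_def
  proof (intro conjI ballI)
    show "is_interval {s. (x,s) \<in> DP}" "0 \<in> {s. (x,s) \<in> DP}" using iv x by auto
    have m: "(\<lambda>s. (x,s)) ` {s. (x,s) \<in> DP} \<subseteq> DP" by auto
    show "continuous_on {s. (x,s) \<in> DP} (\<lambda>s. P (x,s))"
      by (rule continuous_on_compose2[OF cP _ m]) (intro continuous_intros)
    show "(\<lambda>s. P (x,s)) ` {s. (x,s) \<in> DP} \<subseteq> D" using im by auto
    show "P (x,0) = x" using P0 x by auto
    fix s assume "s \<in> {s. (x,s) \<in> DP}"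
    then show "f (P (x,s)) = Psi (f x0) (f x) s" using fP by simp
  qed
qed

lemma flow_agree:
  assumes C1: "conj_flow D f x0 DP1 P1" and C2: "conj_flow D f x0 DP2 P2" and p: "p \<in> DP1" "p \<in> DP2"
  shows "P1 p = P2 p"
proof -
  obtain x t where pxt: "p = (x,t)" by (cases p)
  show ?thesis using lift_agree[OF flow_lift(1)[OF C1 p(1)[unfolded pxt]] flow_lift(1)[OF C2 p(2)[unfolded pxt]]] p pxt
    by simp
qed

lemma flow_sub: "conj_flow D f x0 DP P \<Longrightarrow> DP \<subseteq> WW D f x0"
proof
  fix p assume C: "conj_flow D f x0 DP P" and p: "p \<in> DP"
  obtain x t where pxt: "p = (x,t)" by (cases p)
  show "p \<in> WW D f x0" using PP_eq(1)[OF flow_lift(1)[OF C p[unfolded pxt]]] p pxt by simp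
qed

end


definition DQ :: "('a::real_normed_vector \<Rightarrow> 'a \<Rightarrow>\<^sub>L 'b::real_normed_vector) \<Rightarrow> ('a \<Rightarrow> 'b) \<Rightarrow> 'a \<Rightarrow> 'a \<times> real \<Rightarrow> ('a \<times> real) \<Rightarrow>\<^sub>L 'b" where
  "DQ f' f x0 p = exp (- snd p) *\<^sub>R (f' (fst p) o\<^sub>L fst_blinfun)
      - (blinfun_scaleR_left (exp (- snd p) *\<^sub>R (f (fst p) - f x0)) o\<^sub>L snd_blinfun)"

lemma DQ_apply: "blinfun_apply (DQ f' f x0 p) h = exp (- snd p) *\<^sub>R f' (fst p) (fst h) - snd h *\<^sub>R (exp (- snd p) *\<^sub>R (f (fst p) - f x0))"
  unfolding DQ_def by (simp add: blinfun.bilinear_simps)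

context
  fixes D :: "'a::real_normed_vector set" and f :: "'a \<Rightarrow> 'b::real_normed_vector" and x0 :: 'a
    and f' :: "'a \<Rightarrow> 'a \<Rightarrow>\<^sub>L 'b"
  assumes oD: "open D" and lh: "local_homeo_on D f" and LC: "local_C1_diffeo_on D f f'"
begin

lemma fder: "x \<in> D \<Longrightarrow> (f has_derivative blinfun_apply (f' x)) (at x)"
  using LC unfolding local_C1_diffeo_on_def by blast

lemma f'cont: "continuous_on D f'"
  using LC unfolding local_C1_diffeo_on_def by blast

lemma C1_chart:
  assumes "z \<in> D"
  obtains U g g' where "open U" "z \<in> U" "U \<subseteq> D" "open (f ` U)" "homeomorphism U (f ` U) f g"
    "\<And>y. y \<in> f ` U \<Longrightarrow> (g has_derivative blinfun_apply (g' y)) (at y)" "continuous_on (f ` U) g'"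
  using LC assms unfolding local_C1_diffeo_on_def by metis

lemma chart_inv:
  assumes U: "open U" "U \<subseteq> D" "open (f ` U)" "homeomorphism U (f ` U) f g"
    and gd: "\<And>y. y \<in> f ` U \<Longrightarrow> (g has_derivative blinfun_apply (g' y)) (at y)"
    and w: "w \<in> U"
  shows "inv (blinfun_apply (f' w)) = blinfun_apply (g' (f w))"
    "\<And>h. g' (f w) (f' w h) = h" "\<And>k. f' w (g' (f w) k) = k"
proof -
  have gf: "\<And>y. y \<in> U \<Longrightarrow> g (f y) = y" and fg: "\<And>y. y \<in> f ` U \<Longrightarrow> f (g y) = y"
    and gU: "\<And>y. y \<in> f ` U \<Longrightarrow> g y \<in> U"
    using U(4) unfolding homeomorphism_def by auto
  have wD: "w \<in> D" using w U(2) by blast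
  have fw: "f w \<in> f ` U" using w by blast
  have d1: "((\<lambda>x. g (f x)) has_derivative (\<lambda>h. g' (f w) (f' w h))) (at w)"
    by (rule has_derivative_compose[OF fder[OF wD] gd[OF fw]])
  have d1': "((\<lambda>x. x) has_derivative (\<lambda>h. g' (f w) (f' w h))) (at w)"
    by (rule has_derivative_transform_within_open[OF d1 U(1) w]) (simp add: gf)
  have e1: "(\<lambda>h. g' (f w) (f' w h)) = (\<lambda>h. h)"
    by (rule has_derivative_unique[OF d1' has_derivative_ident])
  have gw: "g (f w) = w" using gf[OF w] .
  have d2: "((\<lambda>y. f (g y)) has_derivative (\<lambda>k. f' w (g' (f w) k))) (at (f w))"
    using has_derivative_compose[OF gd[OF fw], of f "f' w"] fder[OF wD] gw by simp
  have d2': "((\<lambda>y. y) has_derivative (\<lambda>k. f' w (g' (f w) k))) (at (f w))"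
    by (rule has_derivative_transform_within_open[OF d2 U(3) fw]) (simp add: fg)
  have e2: "(\<lambda>k. f' w (g' (f w) k)) = (\<lambda>k. k)"
    by (rule has_derivative_unique[OF d2' has_derivative_ident])
  show "\<And>h. g' (f w) (f' w h) = h" using e1 by metis
  show "\<And>k. f' w (g' (f w) k) = k" using e2 by metis
  show "inv (blinfun_apply (f' w)) = blinfun_apply (g' (f w))"
    by (rule inv_unique_comp) (use e1 e2 in \<open>auto simp: fun_eq_iff\<close>)
qed

lemma f'_inv:
  assumes z: "z \<in> D"
  shows "\<And>y. f' z (inv (blinfun_apply (f' z)) y) = y"
    "Blinfun (inv (blinfun_apply (f' z))) = Blinfun (inv (blinfun_apply (f' z)))"
proof -
  obtain U g g' where U: "open U" "z \<in> U" "U \<subseteq> D" "open (f ` U)" "homeomorphism U (f ` U) f g"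
    "\<And>y. y \<in> f ` U \<Longrightarrow> (g has_derivative blinfun_apply (g' y)) (at y)" "continuous_on (f ` U) g'"
    using C1_chart[OF z] by blast
  note ci = chart_inv[OF U(1,3,4,5) U(6) U(2)]
  show "\<And>y. f' z (inv (blinfun_apply (f' z)) y) = y" using ci(3) by (simp add: ci(1))
qed simp

lemma IV_loc:
  assumes U: "open U" "U \<subseteq> D" "open (f ` U)" "homeomorphism U (f ` U) f g"
    and gd: "\<And>y. y \<in> f ` U \<Longrightarrow> (g has_derivative blinfun_apply (g' y)) (at y)"
    and w: "w \<in> U"
  shows "Blinfun (inv (blinfun_apply (f' w))) = g' (f w)"
  by (simp add: chart_inv(1)[OF U gd w] blinfun_apply_inverse)

lemma IV_cont: "continuous_on D (\<lambda>z. Blinfun (inv (blinfun_apply (f' z))))"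
proof (intro continuous_at_imp_continuous_on ballI)
  fix z assume z: "z \<in> D"
  obtain U g g' where U: "open U" "z \<in> U" "U \<subseteq> D" "open (f ` U)" "homeomorphism U (f ` U) f g"
    "\<And>y. y \<in> f ` U \<Longrightarrow> (g has_derivative blinfun_apply (g' y)) (at y)" "continuous_on (f ` U) g'"
    using C1_chart[OF z] by blast
  have c1: "continuous_on U (\<lambda>w. g' (f w))"
    by (rule continuous_on_compose2[OF U(7) homeomorphism_cont1[OF U(5)]]) blast
  have c2: "continuous_on U (\<lambda>w. Blinfun (inv (blinfun_apply (f' w))))"
    by (rule continuous_on_eq[OF c1]) (use IV_loc[OF U(1,3,4,5) U(6)] in simp)
  show "isCont (\<lambda>z. Blinfun (inv (blinfun_apply (f' z)))) z"
    using c2 U(1,2) continuous_on_eq_continuous_at by blast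
qed

lemma ode_lift:
  assumes x: "x \<in> D" and I: "is_interval I" "0 \<in> I" and u0: "u 0 = x" and uI: "u ` I \<subseteq> D"
    and ud: "\<And>t. t \<in> I \<Longrightarrow> (u has_vector_derivative (- (inv (blinfun_apply (f' (u t))) (f (u t) - f x0)))) (at t within I)"
  shows "lift D f x0 x I u"
  unfolding lift_def
proof (intro conjI ballI)
  show "is_interval I" "0 \<in> I" "u 0 = x" "u ` I \<subseteq> D" by fact+
  show "continuous_on I u" using ud by (rule continuous_on_vector_derivative)
  define h where "h = (\<lambda>t. exp t *\<^sub>R (f (u t) - f x0))"
  have hd: "(h has_derivative (\<lambda>_. 0)) (at t within I)" if t: "t \<in> I" for t
  proof -
    have utD: "u t \<in> D" using uI t by blast
    have d1: "(u has_derivative (\<lambda>s. s *\<^sub>R (- (inv (blinfun_apply (f' (u t))) (f (u t) - f x0))))) (at t within I)"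
      using ud[OF t] unfolding has_vector_derivative_def .
    have d2: "((\<lambda>s. f (u s)) has_derivative (\<lambda>s. f' (u t) (s *\<^sub>R (- (inv (blinfun_apply (f' (u t))) (f (u t) - f x0)))))) (at t within I)"
      by (rule has_derivative_compose[OF d1 fder[OF utD]])
    have e: "f' (u t) (s *\<^sub>R (- (inv (blinfun_apply (f' (u t))) (f (u t) - f x0)))) = - (s *\<^sub>R (f (u t) - f x0))" for s
      by (simp add: blinfun.bilinear_simps f'_inv(1)[OF utD])
    have d3: "((\<lambda>s. f (u s) - f x0) has_derivative (\<lambda>s. - (s *\<^sub>R (f (u t) - f x0)))) (at t within I)"
      using has_derivative_diff[OF d2 has_derivative_const[of "f x0"]] unfolding e by simp
    have "(exp has_field_derivative exp t) (at t within I)"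
      by (rule has_field_derivative_at_within[OF DERIV_exp])
    then have d4: "(exp has_derivative (\<lambda>s. exp t * s)) (at t within I)"
      unfolding has_field_derivative_def .
    have "(h has_derivative (\<lambda>s. exp t *\<^sub>R (- (s *\<^sub>R (f (u t) - f x0))) + (exp t * s) *\<^sub>R (f (u t) - f x0))) (at t within I)"
      unfolding h_def by (rule has_derivative_scaleR[OF d4 d3])
    moreover have "(\<lambda>s. exp t *\<^sub>R (- (s *\<^sub>R (f (u t) - f x0))) + (exp t * s) *\<^sub>R (f (u t) - f x0)) = (\<lambda>_. 0)"
      by (simp add: fun_eq_iff algebra_simps)
    ultimately show ?thesis by simp
  qed
  obtain c where c: "\<forall>t\<in>I. h t = c" using has_derivative_zero_constant[OF is_interval_convex[OF I(1)] hd] by blast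
  fix s assume s: "s \<in> I"
  have "h s = h 0" using c s I(2) by simp
  then have "exp s *\<^sub>R (f (u s) - f x0) = f x - f x0" unfolding h_def using u0 by simp
  moreover have "f (u s) - f x0 = exp (-s) *\<^sub>R (exp s *\<^sub>R (f (u s) - f x0))"
    by (simp add: scaleR_scaleR exp_add[symmetric])
  ultimately have "f (u s) - f x0 = exp (-s) *\<^sub>R (f x - f x0)" by simp
  then show "f (u s) = Psi (f x0) (f x) s" unfolding Psi_def by (simp add: algebra_simps)
qed

lemma Psi_vderiv:
  "((\<lambda>s. Psi y0 y s) has_vector_derivative (- (Psi y0 y t - y0))) (at t within S)"
proof -
  have e1: "((\<lambda>s. exp (-s)) has_field_derivative (- exp (-t))) (at t within S)"
    by (auto intro!: derivative_eq_intros)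
  have e2: "((\<lambda>s. exp (-s) *\<^sub>R (y - y0)) has_vector_derivative (exp (-t) *\<^sub>R 0 + (- exp (-t)) *\<^sub>R (y - y0))) (at t within S)"
    by (rule has_vector_derivative_scaleR[OF e1 has_vector_derivative_const])
  have "((\<lambda>s. y0 + exp (-s) *\<^sub>R (y - y0)) has_vector_derivative (0 + (exp (-t) *\<^sub>R 0 + (- exp (-t)) *\<^sub>R (y - y0)))) (at t within S)"
    by (rule has_vector_derivative_add[OF has_vector_derivative_const e2])
  then show ?thesis unfolding Psi_def by simp
qed

lemma time_deriv:
  assumes W: "(x,t) \<in> WW D f x0"
  shows "((\<lambda>s. PP D f x0 (x,s)) has_vector_derivative
           (- (inv (blinfun_apply (f' (PP D f x0 (x,t)))) (f (PP D f x0 (x,t)) - f x0)))) (at t)"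
proof -
  define z where "z = PP D f x0 (x,t)"
  have zD: "z \<in> D" using PP_f(2)[OF oD lh W] z_def by simp
  have fz: "f z = Psi (f x0) (f x) t" using PP_f(1)[OF oD lh W] z_def by simp
  obtain U g g' where U: "open U" "z \<in> U" "U \<subseteq> D" "open (f ` U)" "homeomorphism U (f ` U) f g"
    "\<And>y. y \<in> f ` U \<Longrightarrow> (g has_derivative blinfun_apply (g' y)) (at y)" "continuous_on (f ` U) g'"
    using C1_chart[OF zD] by blast
  have gf: "\<And>y. y \<in> U \<Longrightarrow> g (f y) = y" using U(5) unfolding homeomorphism_def by auto
  obtain \<rho> where \<rho>: "\<rho> > 0" "ball z \<rho> \<subseteq> U" using U(1,2) open_contains_ball by blast
  obtain \<delta> where \<delta>: "\<delta> > 0" "\<forall>x' t'. dist x' x < \<delta> \<longrightarrow> \<bar>t' - t\<bar> < \<delta> \<longrightarrow>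
     (x',t') \<in> WW D f x0 \<and> dist (PP D f x0 (x',t')) (PP D f x0 (x,t)) < \<rho>"
    using L[OF oD lh W \<rho>(1)] by blast
  have eq: "g (Psi (f x0) (f x) s) = PP D f x0 (x,s)" if s: "s \<in> ball t \<delta>" for s
  proof -
    have "dist x x < \<delta>" "\<bar>s - t\<bar> < \<delta>" using \<delta>(1) s by (auto simp: dist_real_def abs_minus_commute)
    note h = \<delta>(2)[rule_format, OF this]
    have "PP D f x0 (x,s) \<in> ball z \<rho>" using h z_def by (simp add: dist_commute)
    then have inU: "PP D f x0 (x,s) \<in> U" using \<rho>(2) by blast
    have "f (PP D f x0 (x,s)) = Psi (f x0) (f x) s" using PP_f(1)[OF oD lh conjunct1[OF h]] .
    then show ?thesis using gf[OF inU] by simp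
  qed
  have fzU: "f z \<in> f ` U" using U(2) by blast
  have dg: "(g has_derivative blinfun_apply (g' (f z))) (at (Psi (f x0) (f x) t))" using U(6)[OF fzU] fz by simp
  have dpsi: "((\<lambda>s. Psi (f x0) (f x) s) has_derivative (\<lambda>h. h *\<^sub>R (- (f z - f x0)))) (at t)"
    using Psi_vderiv[of "f x0" "f x" t UNIV] fz unfolding has_vector_derivative_def by simp
  have "((\<lambda>s. g (Psi (f x0) (f x) s)) has_derivative (\<lambda>h. g' (f z) (h *\<^sub>R (- (f z - f x0))))) (at t)"
    by (rule has_derivative_compose[OF dpsi dg])
  moreover have "(\<lambda>h. g' (f z) (h *\<^sub>R (- (f z - f x0)))) = (\<lambda>h. h *\<^sub>R (- (inv (blinfun_apply (f' z)) (f z - f x0))))"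
    using chart_inv(1)[OF U(1,3,4,5) U(6) U(2)] by (simp add: blinfun.bilinear_simps)
  ultimately have "((\<lambda>s. g (Psi (f x0) (f x) s)) has_vector_derivative (- (inv (blinfun_apply (f' z)) (f z - f x0)))) (at t)"
    unfolding has_vector_derivative_def by simp
  then show ?thesis unfolding z_def
    by (rule has_vector_derivative_transform_within_open[OF _ open_ball centre_in_ball[THEN iffD2, OF \<delta>(1)]])
       (use eq z_def in simp)
qed

lemma DQ_cont: "continuous_on (WW D f x0) (DQ f' f x0)"
proof -
  have s: "fst ` WW D f x0 \<subseteq> D" using PP_f(3)[OF oD lh] by force
  have c1: "continuous_on (WW D f x0) (\<lambda>p. f' (fst p))"
    by (rule continuous_on_compose2[OF f'cont _ s]) (intro continuous_intros)
  have c2: "continuous_on (WW D f x0) (\<lambda>p. f (fst p))"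
  proof (rule continuous_on_compose2[OF _ _ s])
    show "continuous_on D f" using lh_cont[OF lh] by (simp add: continuous_at_imp_continuous_on)
  qed (intro continuous_intros)
  show ?thesis unfolding DQ_def
    by (intro continuous_intros c1 c2 bounded_linear.continuous_on[OF bounded_linear_blinfun_scaleR_left])
qed

lemma PD_cont: "continuous_on (WW D f x0) (\<lambda>p. Blinfun (inv (blinfun_apply (f' (PP D f x0 p)))) o\<^sub>L DQ f' f x0 p)"
proof -
  have s: "PP D f x0 ` WW D f x0 \<subseteq> D" using PP_f(2)[OF oD lh] by force
  have c1: "continuous_on (WW D f x0) (\<lambda>p. Blinfun (inv (blinfun_apply (f' (PP D f x0 p)))))"
    by (rule continuous_on_compose2[OF IV_cont PP_cont[OF oD lh] s])
  show ?thesis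
    by (rule bounded_bilinear.continuous_on[OF bounded_bilinear_blinfun_compose c1 DQ_cont])
qed

lemma joint_deriv:
  assumes W: "p \<in> WW D f x0"
  shows "(PP D f x0 has_derivative blinfun_apply (Blinfun (inv (blinfun_apply (f' (PP D f x0 p)))) o\<^sub>L DQ f' f x0 p)) (at p)"
proof -
  obtain x t where pxt: "p = (x,t)" by (cases p)
  have Wxt: "(x,t) \<in> WW D f x0" using W pxt by simp
  define z where "z = PP D f x0 p"
  have zD: "z \<in> D" using PP_f(2)[OF oD lh Wxt] z_def pxt by simp
  have xD: "x \<in> D" using PP_f(3)[OF oD lh Wxt] .
  have fz: "f z = Psi (f x0) (f x) t" using PP_f(1)[OF oD lh Wxt] z_def pxt by simp
  obtain U g g' where U: "open U" "z \<in> U" "U \<subseteq> D" "open (f ` U)" "homeomorphism U (f ` U) f g"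
    "\<And>y. y \<in> f ` U \<Longrightarrow> (g has_derivative blinfun_apply (g' y)) (at y)" "continuous_on (f ` U) g'"
    using C1_chart[OF zD] by blast
  have gf: "\<And>y. y \<in> U \<Longrightarrow> g (f y) = y" using U(5) unfolding homeomorphism_def by auto
  obtain \<rho> where \<rho>: "\<rho> > 0" "ball z \<rho> \<subseteq> U" using U(1,2) open_contains_ball by blast
  obtain \<delta> where \<delta>: "\<delta> > 0" "\<forall>x' t'. dist x' x < \<delta> \<longrightarrow> \<bar>t' - t\<bar> < \<delta> \<longrightarrow>
     (x',t') \<in> WW D f x0 \<and> dist (PP D f x0 (x',t')) (PP D f x0 (x,t)) < \<rho>"
    using L[OF oD lh Wxt \<rho>(1)] by blast
  define Q where "Q = (\<lambda>q::'a \<times> real. Psi (f x0) (f (fst q)) (snd q))"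
  have eq: "g (Q q) = PP D f x0 q" if q: "q \<in> ball p \<delta>" for q
  proof -
    obtain x' t' where qq: "q = (x',t')" by (cases q)
    have "dist q p < \<delta>" using q by (simp add: dist_commute)
    then have "dist x' x < \<delta>" "\<bar>t' - t\<bar> < \<delta>"
      using dist_pair_le[OF oD lh, where x'=x' and x=x and t'=t' and t=t] unfolding qq pxt by linarith+
    note h = \<delta>(2)[rule_format, OF this]
    have "PP D f x0 (x',t') \<in> ball z \<rho>" using h z_def pxt by (simp add: dist_commute)
    then have inU: "PP D f x0 (x',t') \<in> U" using \<rho>(2) by blast
    have "f (PP D f x0 (x',t')) = Psi (f x0) (f x') t'" using PP_f(1)[OF oD lh conjunct1[OF h]] .
    then show ?thesis using gf[OF inU] unfolding Q_def qq by simp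
  qed
  have d_f: "((\<lambda>q::'a \<times> real. f (fst q)) has_derivative (\<lambda>h. f' x (fst h))) (at p)"
  proof -
    have "(fst has_derivative fst) (at p)" by (rule bounded_linear_imp_has_derivative[OF bounded_linear_fst])
    moreover have "fst p \<in> D" using xD pxt by simp
    ultimately show ?thesis using has_derivative_compose[of fst fst p UNIV f] fder pxt by simp
  qed
  have d_f2: "((\<lambda>q::'a \<times> real. f (fst q) - f x0) has_derivative (\<lambda>h. f' x (fst h) - 0)) (at p)"
    by (rule has_derivative_diff[OF d_f has_derivative_const])
  have d_e: "((\<lambda>q::'a \<times> real. exp (- snd q)) has_derivative (\<lambda>h. exp (- t) * (- snd h))) (at p)"
  proof -
    have a: "((\<lambda>q::'a \<times> real. - snd q) has_derivative (\<lambda>h. - snd h)) (at p)"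
      by (rule bounded_linear_imp_has_derivative) (intro bounded_linear_minus bounded_linear_snd)
    have "(exp has_field_derivative exp (- t)) (at (- snd p))" using DERIV_exp[of "- t"] pxt by simp
    then have b: "(exp has_derivative (\<lambda>s. exp (- t) * s)) (at (- snd p))" unfolding has_field_derivative_def .
    from has_derivative_compose[OF a b] show ?thesis .
  qed
  have d_s: "((\<lambda>q::'a \<times> real. exp (- snd q) *\<^sub>R (f (fst q) - f x0)) has_derivative
      (\<lambda>h. exp (- snd p) *\<^sub>R (f' x (fst h) - 0) + (exp (- t) * (- snd h)) *\<^sub>R (f (fst p) - f x0))) (at p)"
    by (rule has_derivative_scaleR[OF d_e d_f2])
  have d_Q: "(Q has_derivative blinfun_apply (DQ f' f x0 p)) (at p)"
  proof -
    have "((\<lambda>q::'a \<times> real. f x0 + exp (- snd q) *\<^sub>R (f (fst q) - f x0)) has_derivative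
      (\<lambda>h. 0 + (exp (- snd p) *\<^sub>R (f' x (fst h) - 0) + (exp (- t) * (- snd h)) *\<^sub>R (f (fst p) - f x0)))) (at p)"
      by (rule has_derivative_add[OF has_derivative_const d_s])
    moreover have "(\<lambda>h. 0 + (exp (- snd p) *\<^sub>R (f' x (fst h) - 0) + (exp (- t) * (- snd h)) *\<^sub>R (f (fst p) - f x0)))
        = blinfun_apply (DQ f' f x0 p)"
      by (rule ext) (simp add: DQ_apply pxt algebra_simps)
    ultimately show ?thesis unfolding Q_def Psi_def by simp
  qed
  have Qp: "Q p = f z" using fz pxt unfolding Q_def by simp
  have fzU: "f z \<in> f ` U" using U(2) by blast
  have dg: "(g has_derivative blinfun_apply (g' (f z))) (at (Q p))" using U(6)[OF fzU] Qp by simp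
  have "((\<lambda>q. g (Q q)) has_derivative (\<lambda>h. g' (f z) (DQ f' f x0 p h))) (at p)"
    by (rule has_derivative_compose[OF d_Q dg])
  moreover have "(\<lambda>h. g' (f z) (DQ f' f x0 p h)) = blinfun_apply (Blinfun (inv (blinfun_apply (f' z))) o\<^sub>L DQ f' f x0 p)"
    using IV_loc[OF U(1,3,4,5) U(6) U(2)] by (simp add: fun_eq_iff)
  ultimately have "((\<lambda>q. g (Q q)) has_derivative blinfun_apply (Blinfun (inv (blinfun_apply (f' z))) o\<^sub>L DQ f' f x0 p)) (at p)"
    by simp
  then show ?thesis unfolding z_def
    by (rule has_derivative_transform_within_open[OF _ open_ball centre_in_ball[THEN iffD2, OF \<delta>(1)]])
       (use eq in simp)
qed

end

theorem lemma2p1: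
  fixes D :: "'a::banach set" and f :: "'a \<Rightarrow> 'b::banach" and x0 :: 'a
    and f' :: "'a \<Rightarrow> 'a \<Rightarrow>\<^sub>L 'b"
  assumes "open D" and "connected D" and "D \<noteq> {}" and "x0 \<in> D"
    and "local_homeo_on D f"
  shows "(\<exists>DP P. conj_flow D f x0 DP P)
    \<and> (\<forall>DP1 P1 DP2 P2. conj_flow D f x0 DP1 P1 \<longrightarrow> conj_flow D f x0 DP2 P2 \<longrightarrow>
          (\<forall>p\<in>DP1 \<inter> DP2. P1 p = P2 p))
    \<and> (\<exists>DP P. conj_flow D f x0 DP P
          \<and> (\<forall>DP' P'. conj_flow D f x0 DP' P' \<longrightarrow> DP' \<subseteq> DP)
          \<and> (\<forall>DP' P'. conj_flow D f x0 DP' P' \<and> (\<forall>DP'' P''. conj_flow D f x0 DP'' P'' \<longrightarrow> DP'' \<subseteq> DP')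
                \<longrightarrow> DP' = DP \<and> (\<forall>p\<in>DP. P' p = P p))
          \<and> (local_C1_diffeo_on D f f' \<longrightarrow>
              (let F = (\<lambda>x. - (inv (blinfun_apply (f' x)) (f x - f x0))) in
                (\<exists>P'. (\<forall>p\<in>DP. (P has_derivative blinfun_apply (P' p)) (at p)) \<and> continuous_on DP P')
              \<and> (\<forall>x\<in>D. \<forall>t. (x, t) \<in> DP \<longrightarrow>
                   ((\<lambda>s. P (x, s)) has_vector_derivative F (P (x, t))) (at t within {s. (x, s) \<in> DP}))
              \<and> (\<forall>x\<in>D. \<forall>I u. is_interval I \<and> 0 \<in> I \<and> u 0 = x \<and> u ` I \<subseteq> D \<and>
                   (\<forall>t\<in>I. (u has_vector_derivative F (u t)) (at t within I))
                   \<longrightarrow> I \<subseteq> {t. (x, t) \<in> DP} \<and> (\<forall>t\<in>I. u t = P (x, t))))))"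
proof -
  note oD = assms(1) and lh = assms(5)
  have C: "conj_flow D f x0 (WW D f x0) (PP D f x0)" by (rule WW_conj[OF oD lh])
  have P2: "\<forall>DP1 P1 DP2 P2. conj_flow D f x0 DP1 P1 \<longrightarrow> conj_flow D f x0 DP2 P2 \<longrightarrow>
          (\<forall>p\<in>DP1 \<inter> DP2. P1 p = P2 p)"
    using flow_agree[OF oD lh] by blast
  have M1: "\<forall>DP' P'. conj_flow D f x0 DP' P' \<longrightarrow> DP' \<subseteq> WW D f x0" using flow_sub[OF oD lh] by blast
  have M2: "\<forall>DP' P'. conj_flow D f x0 DP' P' \<and> (\<forall>DP'' P''. conj_flow D f x0 DP'' P'' \<longrightarrow> DP'' \<subseteq> DP')
                \<longrightarrow> DP' = WW D f x0 \<and> (\<forall>p\<in>WW D f x0. P' p = PP D f x0 p)"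
  proof (intro allI impI)
    fix DP' P' assume a: "conj_flow D f x0 DP' P' \<and> (\<forall>DP'' P''. conj_flow D f x0 DP'' P'' \<longrightarrow> DP'' \<subseteq> DP')"
    have "WW D f x0 \<subseteq> DP'" using a C by blast
    moreover have "DP' \<subseteq> WW D f x0" using a flow_sub[OF oD lh] by blast
    ultimately have e: "DP' = WW D f x0" by blast
    have "\<forall>p\<in>WW D f x0. P' p = PP D f x0 p"
    proof
      fix p assume "p \<in> WW D f x0"
      then show "P' p = PP D f x0 p" using flow_agree[OF oD lh conjunct1[OF a] C] e by blast
    qed
    then show "DP' = WW D f x0 \<and> (\<forall>p\<in>WW D f x0. P' p = PP D f x0 p)" using e by blast
  qed
  have C1: "local_C1_diffeo_on D f f' \<longrightarrow>
              (let F = (\<lambda>x. - (inv (blinfun_apply (f' x)) (f x - f x0))) in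
                (\<exists>P'. (\<forall>p\<in>WW D f x0. (PP D f x0 has_derivative blinfun_apply (P' p)) (at p)) \<and> continuous_on (WW D f x0) P')
              \<and> (\<forall>x\<in>D. \<forall>t. (x, t) \<in> WW D f x0 \<longrightarrow>
                   ((\<lambda>s. PP D f x0 (x, s)) has_vector_derivative F (PP D f x0 (x, t))) (at t within {s. (x, s) \<in> WW D f x0}))
              \<and> (\<forall>x\<in>D. \<forall>I u. is_interval I \<and> 0 \<in> I \<and> u 0 = x \<and> u ` I \<subseteq> D \<and>
                   (\<forall>t\<in>I. (u has_vector_derivative F (u t)) (at t within I))
                   \<longrightarrow> I \<subseteq> {t. (x, t) \<in> WW D f x0} \<and> (\<forall>t\<in>I. u t = PP D f x0 (x, t))))"
  proof
    assume LC: "local_C1_diffeo_on D f f'"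
    show "let F = (\<lambda>x. - (inv (blinfun_apply (f' x)) (f x - f x0))) in
                (\<exists>P'. (\<forall>p\<in>WW D f x0. (PP D f x0 has_derivative blinfun_apply (P' p)) (at p)) \<and> continuous_on (WW D f x0) P')
              \<and> (\<forall>x\<in>D. \<forall>t. (x, t) \<in> WW D f x0 \<longrightarrow>
                   ((\<lambda>s. PP D f x0 (x, s)) has_vector_derivative F (PP D f x0 (x, t))) (at t within {s. (x, s) \<in> WW D f x0}))
              \<and> (\<forall>x\<in>D. \<forall>I u. is_interval I \<and> 0 \<in> I \<and> u 0 = x \<and> u ` I \<subseteq> D \<and>
                   (\<forall>t\<in>I. (u has_vector_derivative F (u t)) (at t within I))
                   \<longrightarrow> I \<subseteq> {t. (x, t) \<in> WW D f x0} \<and> (\<forall>t\<in>I. u t = PP D f x0 (x, t)))"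
      unfolding Let_def
    proof (intro conjI)
      show "\<exists>P'. (\<forall>p\<in>WW D f x0. (PP D f x0 has_derivative blinfun_apply (P' p)) (at p)) \<and> continuous_on (WW D f x0) P'"
      proof (rule exI[of _ "\<lambda>p. Blinfun (inv (blinfun_apply (f' (PP D f x0 p)))) o\<^sub>L DQ f' f x0 p"], intro conjI ballI)
        fix p assume "p \<in> WW D f x0"
        then show "(PP D f x0 has_derivative blinfun_apply ((\<lambda>p. Blinfun (inv (blinfun_apply (f' (PP D f x0 p)))) o\<^sub>L DQ f' f x0 p) p)) (at p)"
          using joint_deriv[OF oD lh LC] by simp
      qed (rule PD_cont[OF oD lh LC])
      show "\<forall>x\<in>D. \<forall>t. (x, t) \<in> WW D f x0 \<longrightarrow>
                   ((\<lambda>s. PP D f x0 (x, s)) has_vector_derivative - (inv (blinfun_apply (f' (PP D f x0 (x, t)))) (f (PP D f x0 (x, t)) - f x0))) (at t within {s. (x, s) \<in> WW D f x0})"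
        using time_deriv[OF oD lh LC] has_vector_derivative_at_within by blast
      show "\<forall>x\<in>D. \<forall>I u. is_interval I \<and> 0 \<in> I \<and> u 0 = x \<and> u ` I \<subseteq> D \<and>
                   (\<forall>t\<in>I. (u has_vector_derivative - (inv (blinfun_apply (f' (u t))) (f (u t) - f x0))) (at t within I))
                   \<longrightarrow> I \<subseteq> {t. (x, t) \<in> WW D f x0} \<and> (\<forall>t\<in>I. u t = PP D f x0 (x, t))"
      proof (intro ballI allI impI)
        fix x I u assume x: "x \<in> D" and a: "is_interval I \<and> 0 \<in> I \<and> u 0 = x \<and> u ` I \<subseteq> D \<and>
                   (\<forall>t\<in>I. (u has_vector_derivative - (inv (blinfun_apply (f' (u t))) (f (u t) - f x0))) (at t within I))"
        have l: "lift D f x0 x I u"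
          by (rule ode_lift[OF oD lh LC x]) (use a in blast)+
        show "I \<subseteq> {t. (x, t) \<in> WW D f x0} \<and> (\<forall>t\<in>I. u t = PP D f x0 (x, t))"
          using PP_eq[OF oD lh l] by auto
      qed
    qed
  qed
  have part3: "\<exists>DP P. conj_flow D f x0 DP P
          \<and> (\<forall>DP' P'. conj_flow D f x0 DP' P' \<longrightarrow> DP' \<subseteq> DP)
          \<and> (\<forall>DP' P'. conj_flow D f x0 DP' P' \<and> (\<forall>DP'' P''. conj_flow D f x0 DP'' P'' \<longrightarrow> DP'' \<subseteq> DP')
                \<longrightarrow> DP' = DP \<and> (\<forall>p\<in>DP. P' p = P p))
          \<and> (local_C1_diffeo_on D f f' \<longrightarrow>
              (let F = (\<lambda>x. - (inv (blinfun_apply (f' x)) (f x - f x0))) in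
                (\<exists>P'. (\<forall>p\<in>DP. (P has_derivative blinfun_apply (P' p)) (at p)) \<and> continuous_on DP P')
              \<and> (\<forall>x\<in>D. \<forall>t. (x, t) \<in> DP \<longrightarrow>
                   ((\<lambda>s. P (x, s)) has_vector_derivative F (P (x, t))) (at t within {s. (x, s) \<in> DP}))
              \<and> (\<forall>x\<in>D. \<forall>I u. is_interval I \<and> 0 \<in> I \<and> u 0 = x \<and> u ` I \<subseteq> D \<and>
                   (\<forall>t\<in>I. (u has_vector_derivative F (u t)) (at t within I))
                   \<longrightarrow> I \<subseteq> {t. (x, t) \<in> DP} \<and> (\<forall>t\<in>I. u t = P (x, t)))))"
    by (rule exI[of _ "WW D f x0"], rule exI[of _ "PP D f x0"], intro conjI C M1 M2 C1)
  have part1: "\<exists>DP P. conj_flow D f x0 DP P" using C by blast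
  show ?thesis using part1 P2 part3 by (intro conjI)
qed

end
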